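(* For smooth solutions (with $\rho>0$, $\Theta>0$, $\beta\in\mathcal S$), the NSME system $$\partial_t(\rho\langle m^{-1}\rangle_\beta)+\nabla_x\cdot(\rho\langle m^{-1}\rangle_\beta u)=\varepsilon\nabla_x\cdot(\nu\nabla_x\chi),\qquad \partial_t\rho+\nabla_x\cdot(\rho u)=0,$$ $$\partial_t(\rho u)+\nabla_x\cdot(\rho u\otimes u)+\nabla_x(\rho\Theta\langle m^{-1}\rangle_\beta)=\varepsilon\nabla_x\cdot(\mu\sigma(u)),$$ $$\partial_t(\rho|u|^2+n\rho\Theta\langle m^{-1}\rangle_\beta)+\nabla_x\cdot(\rho|u|^2u+(n+2)\rho\Theta\langle m^{-1}\rangle_\beta u)=\varepsilon\nabla_x\cdot\big((n+2)\nu\Theta\nabla_x\chi+2\kappa\nabla_x\Theta+2\mu\sigma(u)u\big)$$ is equivalent to the system, for the entropic variables $\mathcal A=(\mathcal A^\alpha)_{\alpha=1}^{n+3}$, $$\frac{\partial}{\partial t}\Big(\frac{\partial\Sigma}{\partial\mathcal A^\alpha}(\mathcal A)\Big)+\nabla_x\cdot\Big(\frac{\partial\Phi}{\partial\mathcal A^\alpha}(\mathcal A)\Big)=\nabla_x\cdot\Big(\sum_{\beta'=1}^{n+3}\mathbb X^{\alpha\beta'}\nabla_x\mathcal A^{\beta'}\Big),\qquad\alpha=1,\dots,n+3,$$ where the $n\times n$ blocks $\mathbb X^{\alpha\beta'}$ are defined in the context; moreover the block matrix $\mathbb X=(\mathbb X^{\alpha\beta'})$ is symmetric.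
   Context: Let $n\ge1$, $\varepsilon>0$, $(\gamma_m)_{m\ge1}$ in $[0,\infty)$ with $\mathcal S:=\{\beta:\sum_m\frac{me^{\beta m}}{\gamma_m}<\infty\}\ne\emptyset$; $\langle a_m\rangle_\beta:=\sum_m\frac{me^{\beta m}}{\gamma_m}a_m/\sum_m\frac{me^{\beta m}}{\gamma_m}$; $Z(\beta,\Theta)=(2\pi\Theta)^{n/2}\sum_m\frac{me^{\beta m}}{\gamma_m}$. Coefficients: $\mu=\rho\Theta\langle m^{-1}\rangle_\beta$, $\kappa=\frac{n+2}2\rho\Theta\langle m^{-2}\rangle_\beta$, $\nu=\rho\Theta(\langle m^{-2}\rangle_\beta-\langle m^{-1}\rangle_\beta^2)$; $\sigma(u)=\nabla_xu+(\nabla_xu)^T-\frac2n(\nabla_x\cdot u)\mathrm I_n$; $\chi=\log(\rho\Theta/\sum_m\frac{me^{\beta m}}{\gamma_m})$. Entropic variables $\mathcal A=(D,A,B,C)$ with components $\mathcal A^\alpha=D_\alpha$ ($\alpha\le n$), $\mathcal A^{n+1}=A$, $\mathcal A^{n+2}=B$, $\mathcal A^{n+3}=C$, related to $(\rho,u,\Theta,\beta)$ by $C=-\frac1{2\Theta}$, $D=\frac u\Theta$, $B=\beta-\frac{|u|^2}{2\Theta}$, $A=\log(\rho/Z(\beta,\Theta))$. With $\boldsymbol\mu_m(v)\bullet\mathcal A:=mv\cdot D+A+mB+m|v|^2C$: $\Sigma(\mathcal A)=\sum_m\int_{\mathbb{R}^n}\frac{m^{n/2}}{\gamma_m}e^{\boldsymbol\mu_m(v)\bullet\mathcal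 A}dv$, $\Phi(\mathcal A)=\sum_m\int_{\mathbb{R}^n}\frac{m^{n/2}}{\gamma_m}e^{\boldsymbol\mu_m(v)\bullet\mathcal A}v\,dv\in\mathbb{R}^n$. With $(e_1,\dots,e_n)$ the canonical basis and $\mathrm 0_n$ the zero matrix: $\mathbb X^{\alpha\beta'}=\varepsilon\mu\Theta(\mathrm I_n\delta^{\alpha\beta'}+e_{\beta'}\otimes e_\alpha-\frac2ne_\alpha\otimes e_{\beta'})$ for $\alpha,\beta'\le n$; $\mathbb X^{\alpha,n+1}=\mathbb X^{\alpha,n+2}=(\mathbb X^{n+1,\alpha})^T=(\mathbb X^{n+2,\alpha})^T=\mathrm 0_n$ for $\alpha\le n$; $\mathbb X^{\alpha,n+3}=(\mathbb X^{n+3,\alpha})^T=2\varepsilon\mu\Theta(u_\alpha\mathrm I_n+u\otimes e_\alpha-\frac2ne_\alpha\otimes u)$ for $\alpha\le n$; $\mathbb X^{n+1,n+1}=\varepsilon\nu\mathrm I_n$, $\mathbb X^{n+1,n+2}=\mathbb X^{n+2,n+1}=\mathbb X^{n+2,n+2}=\mathrm 0_n$; $\mathbb X^{n+1,n+3}=\mathbb X^{n+3,n+1}=(n+2)\varepsilon\nu\Theta\mathrm I_n$, $\mathbb X^{n+2,n+3}=\mathbb X^{n+3,n+2}=\mathrm 0_n$; $\mathbb X^{n+3,n+3}=\varepsilon\Theta[((n+2)^2\nu\Theta+4\kappa\Theta+4\mu|u|^2)\mathrm I_n+4\frac{n-2}n\mu\,u\otimes u]$. Here $(a\otimes b)_{ij}=a_ib_j$,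 and $\nabla_x\cdot$ of a matrix field acts row-wise. *)

theory Defs
  imports "HOL-Analysis.Analysis"
begin

definition dirD :: "'a::real_normed_vector \<Rightarrow> ('a \<Rightarrow> real) \<Rightarrow> 'a \<Rightarrow> real" where
  "dirD v f p = deriv (\<lambda>s. f (p + s *\<^sub>R v)) 0"

definition smooth_on :: "'a::euclidean_space set \<Rightarrow> ('a \<Rightarrow> real) \<Rightarrow> bool" where
  "smooth_on U f \<longleftrightarrow>
     (\<forall>vs. set vs \<subseteq> Basis \<longrightarrow>
        continuous_on U (foldr dirD vs f) \<and>
        (\<forall>v\<in>Basis. \<forall>p\<in>U. (\<lambda>s. foldr dirD vs f (p + s *\<^sub>R v)) differentiable (at 0)))"

definition pdt :: "(real \<Rightarrow> real^'n \<Rightarrow> real) \<Rightarrow> real \<Rightarrow> real^'n \<Rightarrow> real" where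
  "pdt f t x = deriv (\<lambda>s. f s x) t"

definition pdx :: "'n \<Rightarrow> (real \<Rightarrow> real^'n \<Rightarrow> real) \<Rightarrow> real \<Rightarrow> real^'n \<Rightarrow> real" where
  "pdx i f t x = deriv (\<lambda>s. f t (x + s *\<^sub>R axis i 1)) 0"

definition grad :: "(real \<Rightarrow> real^'n \<Rightarrow> real) \<Rightarrow> real \<Rightarrow> real^'n \<Rightarrow> real^'n" where
  "grad f t x = (\<chi> i. pdx i f t x)"

definition divg :: "(real \<Rightarrow> real^'n \<Rightarrow> real^'n) \<Rightarrow> real \<Rightarrow> real^'n \<Rightarrow> real" where
  "divg F t x = (\<Sum>i\<in>UNIV. pdx i (\<lambda>t x. F t x $ i) t x)"

definition divm :: "(real \<Rightarrow> real^'n \<Rightarrow> real^'n^'n) \<Rightarrow> real \<Rightarrow> real^'n \<Rightarrow> real^'n" where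
  "divm M t x = (\<chi> j. \<Sum>i\<in>UNIV. pdx i (\<lambda>t x. M t x $ j $ i) t x)"

definition jac :: "(real \<Rightarrow> real^'n \<Rightarrow> real^'n) \<Rightarrow> real \<Rightarrow> real^'n \<Rightarrow> real^'n^'n" where
  "jac u t x = (\<chi> i j. pdx j (\<lambda>t x. u t x $ i) t x)"

definition outer :: "real^'n \<Rightarrow> real^'n \<Rightarrow> real^'n^'n" where
  "outer a b = (\<chi> i j. a $ i * b $ j)"

definition sigma :: "(real \<Rightarrow> real^'n \<Rightarrow> real^'n) \<Rightarrow> real \<Rightarrow> real^'n \<Rightarrow> real^'n^'n" where
  "sigma u t x = jac u t x + transpose (jac u t x)
      - ((2 / real CARD('n)) * divg u t x) *\<^sub>R mat 1"

section \<open>Weights, averages, coefficients  (species index m ranges over m >= 1)\<close>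

definition wgt :: "(nat \<Rightarrow> real) \<Rightarrow> real \<Rightarrow> nat \<Rightarrow> real" where
  "wgt \<gamma> b m = real m * exp (b * real m) / \<gamma> m"

definition Wsum :: "(nat \<Rightarrow> real) \<Rightarrow> real \<Rightarrow> real" where
  "Wsum \<gamma> b = (\<Sum>m. wgt \<gamma> b (Suc m))"

definition Sset :: "(nat \<Rightarrow> real) \<Rightarrow> real set" where
  "Sset \<gamma> = {b. summable (\<lambda>m. wgt \<gamma> b (Suc m))}"

definition avg :: "(nat \<Rightarrow> real) \<Rightarrow> real \<Rightarrow> (nat \<Rightarrow> real) \<Rightarrow> real" where
  "avg \<gamma> b a = (\<Sum>m. wgt \<gamma> b (Suc m) * a (Suc m)) / Wsum \<gamma> b"

definition Zfun :: "nat \<Rightarrow> (nat \<Rightarrow> real) \<Rightarrow> real \<Rightarrow> real \<Rightarrow> real" where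
  "Zfun n \<gamma> b \<Theta> = (2 * pi * \<Theta>) powr (real n / 2) * Wsum \<gamma> b"

definition mu_c :: "(nat \<Rightarrow> real) \<Rightarrow> real \<Rightarrow> real \<Rightarrow> real \<Rightarrow> real" where
  "mu_c \<gamma> \<rho> \<Theta> b = \<rho> * \<Theta> * avg \<gamma> b (\<lambda>m. 1 / real m)"

definition kappa_c :: "nat \<Rightarrow> (nat \<Rightarrow> real) \<Rightarrow> real \<Rightarrow> real \<Rightarrow> real \<Rightarrow> real" where
  "kappa_c n \<gamma> \<rho> \<Theta> b = (real n + 2) / 2 * \<rho> * \<Theta> * avg \<gamma> b (\<lambda>m. 1 / (real m)^2)"

definition nu_c :: "(nat \<Rightarrow> real) \<Rightarrow> real \<Rightarrow> real \<Rightarrow> real \<Rightarrow> real" where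
  "nu_c \<gamma> \<rho> \<Theta> b = \<rho> * \<Theta> * (avg \<gamma> b (\<lambda>m. 1 / (real m)^2) - (avg \<gamma> b (\<lambda>m. 1 / real m))^2)"

definition chi_c :: "(nat \<Rightarrow> real) \<Rightarrow> real \<Rightarrow> real \<Rightarrow> real \<Rightarrow> real" where
  "chi_c \<gamma> \<rho> \<Theta> b = ln (\<rho> * \<Theta> / Wsum \<gamma> b)"

text \<open>Index set {1..n+3} of the entropic variables: EDi i (i = 1..n) stands
  for alpha = i (component D_i), EA for n+1, EB for n+2, EC for n+3.\<close>
datatype 'n eidx = EDi 'n | EA | EB | EC

lemma UNIV_eidx: "(UNIV :: 'n eidx set) = range EDi \<union> {EA, EB, EC}"
proof (rule set_eqI)
  fix x :: "'n eidx"
  show "x \<in> UNIV \<longleftrightarrow> x \<in> range EDi \<union> {EA, EB, EC}"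
    by (cases x) auto
qed

instance eidx :: (finite) finite
  by standard (simp add: UNIV_eidx)

definition Avar :: "(nat \<Rightarrow> real) \<Rightarrow> real \<Rightarrow> real^'n \<Rightarrow> real \<Rightarrow> real \<Rightarrow> ('n::finite) eidx \<Rightarrow> real" where
  "Avar \<gamma> \<rho> u \<Theta> b = (\<lambda>\<alpha>. case \<alpha> of
       EDi i \<Rightarrow> u $ i / \<Theta>
     | EA \<Rightarrow> ln (\<rho> / Zfun CARD('n) \<gamma> b \<Theta>)
     | EB \<Rightarrow> b - (norm u)^2 / (2 * \<Theta>)
     | EC \<Rightarrow> - 1 / (2 * \<Theta>))"

definition mudot :: "nat \<Rightarrow> real^'n \<Rightarrow> (('n::finite) eidx \<Rightarrow> real) \<Rightarrow> real" where
  "mudot m v a = real m * (v \<bullet> (\<chi> i. a (EDi i))) + a EA + real m * a EB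
                  + real m * (norm v)^2 * a EC"

definition Sigma_f :: "(nat \<Rightarrow> real) \<Rightarrow> (('n::finite) eidx \<Rightarrow> real) \<Rightarrow> real" where
  "Sigma_f \<gamma> a = (\<Sum>m. LINT v|(lborel :: (real^'n) measure).
       real (Suc m) powr (real CARD('n) / 2) / \<gamma> (Suc m) * exp (mudot (Suc m) v a))"

definition Phi_f :: "(nat \<Rightarrow> real) \<Rightarrow> (('n::finite) eidx \<Rightarrow> real) \<Rightarrow> real^'n" where
  "Phi_f \<gamma> a = (\<Sum>m. LINT v|(lborel :: (real^'n) measure).
       (real (Suc m) powr (real CARD('n) / 2) / \<gamma> (Suc m) * exp (mudot (Suc m) v a)) *\<^sub>R v)"

definition pSigma :: "(nat \<Rightarrow> real) \<Rightarrow> ('n::finite) eidx \<Rightarrow> ('n eidx \<Rightarrow> real) \<Rightarrow> real" where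
  "pSigma \<gamma> \<alpha> a = deriv (\<lambda>s. Sigma_f \<gamma> (a(\<alpha> := a \<alpha> + s))) 0"

definition pPhi :: "(nat \<Rightarrow> real) \<Rightarrow> ('n::finite) eidx \<Rightarrow> ('n eidx \<Rightarrow> real) \<Rightarrow> real^'n" where
  "pPhi \<gamma> \<alpha> a = vector_derivative (\<lambda>s. Phi_f \<gamma> (a(\<alpha> := a \<alpha> + s))) (at 0)"

definition XDC :: "real \<Rightarrow> real \<Rightarrow> real \<Rightarrow> real^'n \<Rightarrow> 'n \<Rightarrow> real^'n^'n" where
  "XDC \<epsilon> \<mu> \<Theta> u a = (2 * \<epsilon> * \<mu> * \<Theta>) *\<^sub>R ((u $ a) *\<^sub>R mat 1 + outer u (axis a 1)
        - (2 / real CARD('n)) *\<^sub>R outer (axis a 1) u)"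

definition Xblk :: "real \<Rightarrow> real \<Rightarrow> real \<Rightarrow> real \<Rightarrow> real \<Rightarrow> real^'n \<Rightarrow> ('n::finite) eidx \<Rightarrow> 'n eidx \<Rightarrow> real^'n^'n" where
  "Xblk \<epsilon> \<mu> \<nu> \<kappa> \<Theta> u \<alpha> \<beta>' =
    (case \<alpha> of
       EDi a \<Rightarrow> (case \<beta>' of
           EDi b \<Rightarrow> (\<epsilon> * \<mu> * \<Theta>) *\<^sub>R ((if a = b then mat 1 else 0) + outer (axis b 1) (axis a 1)
                        - (2 / real CARD('n)) *\<^sub>R outer (axis a 1) (axis b 1))
         | EA \<Rightarrow> 0
         | EB \<Rightarrow> 0
         | EC \<Rightarrow> XDC \<epsilon> \<mu> \<Theta> u a)
     | EA \<Rightarrow> (case \<beta>' of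
           EDi b \<Rightarrow> 0
         | EA \<Rightarrow> (\<epsilon> * \<nu>) *\<^sub>R mat 1
         | EB \<Rightarrow> 0
         | EC \<Rightarrow> ((real CARD('n) + 2) * \<epsilon> * \<nu> * \<Theta>) *\<^sub>R mat 1)
     | EB \<Rightarrow> 0
     | EC \<Rightarrow> (case \<beta>' of
           EDi b \<Rightarrow> transpose (XDC \<epsilon> \<mu> \<Theta> u b)
         | EA \<Rightarrow> ((real CARD('n) + 2) * \<epsilon> * \<nu> * \<Theta>) *\<^sub>R mat 1
         | EB \<Rightarrow> 0
         | EC \<Rightarrow> (\<epsilon> * \<Theta>) *\<^sub>R (((real CARD('n) + 2)^2 * \<nu> * \<Theta> + 4 * \<kappa> * \<Theta>
                        + 4 * \<mu> * (norm u)^2) *\<^sub>R mat 1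
                      + (4 * (real CARD('n) - 2) / real CARD('n) * \<mu>) *\<^sub>R outer u u)))"

definition Afield :: "(nat \<Rightarrow> real) \<Rightarrow> (real \<Rightarrow> real^'n \<Rightarrow> real) \<Rightarrow> (real \<Rightarrow> real^'n \<Rightarrow> real^'n)
     \<Rightarrow> (real \<Rightarrow> real^'n \<Rightarrow> real) \<Rightarrow> (real \<Rightarrow> real^'n \<Rightarrow> real) \<Rightarrow> real \<Rightarrow> real^'n \<Rightarrow> 'n eidx \<Rightarrow> real" where
  "Afield \<gamma> \<rho> u \<Theta> \<beta> t x = Avar \<gamma> (\<rho> t x) (u t x) (\<Theta> t x) (\<beta> t x)"

definition Xfield :: "(nat \<Rightarrow> real) \<Rightarrow> real \<Rightarrow> (real \<Rightarrow> real^'n \<Rightarrow> real) \<Rightarrow> (real \<Rightarrow> real^'n \<Rightarrow> real^'n)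
     \<Rightarrow> (real \<Rightarrow> real^'n \<Rightarrow> real) \<Rightarrow> (real \<Rightarrow> real^'n \<Rightarrow> real) \<Rightarrow> real \<Rightarrow> real^'n
     \<Rightarrow> 'n eidx \<Rightarrow> 'n eidx \<Rightarrow> real^'n^'n" where
  "Xfield \<gamma> \<epsilon> \<rho> u \<Theta> \<beta> t x =
     Xblk \<epsilon> (mu_c \<gamma> (\<rho> t x) (\<Theta> t x) (\<beta> t x)) (nu_c \<gamma> (\<rho> t x) (\<Theta> t x) (\<beta> t x))
          (kappa_c CARD('n) \<gamma> (\<rho> t x) (\<Theta> t x) (\<beta> t x)) (\<Theta> t x) (u t x)"

definition NSME :: "(nat \<Rightarrow> real) \<Rightarrow> real \<Rightarrow> (real \<Rightarrow> real^'n \<Rightarrow> real) \<Rightarrow> (real \<Rightarrow> real^'n \<Rightarrow> real^'n)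
     \<Rightarrow> (real \<Rightarrow> real^'n \<Rightarrow> real) \<Rightarrow> (real \<Rightarrow> real^'n \<Rightarrow> real) \<Rightarrow> real \<Rightarrow> real^'n \<Rightarrow> bool" where
  "NSME \<gamma> \<epsilon> \<rho> u \<Theta> \<beta> t x \<longleftrightarrow>
    (let n = real CARD('n);
         m1 = (\<lambda>t x. avg \<gamma> (\<beta> t x) (\<lambda>m. 1 / real m));
         muF = (\<lambda>t x. mu_c \<gamma> (\<rho> t x) (\<Theta> t x) (\<beta> t x));
         nuF = (\<lambda>t x. nu_c \<gamma> (\<rho> t x) (\<Theta> t x) (\<beta> t x));
         kaF = (\<lambda>t x. kappa_c CARD('n) \<gamma> (\<rho> t x) (\<Theta> t x) (\<beta> t x));
         chF = (\<lambda>t x. chi_c \<gamma> (\<rho> t x) (\<Theta> t x) (\<beta> t x))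
     in
      pdt (\<lambda>t x. \<rho> t x * m1 t x) t x + divg (\<lambda>t x. (\<rho> t x * m1 t x) *\<^sub>R u t x) t x
        = \<epsilon> * divg (\<lambda>t x. nuF t x *\<^sub>R grad chF t x) t x
    \<and> pdt \<rho> t x + divg (\<lambda>t x. \<rho> t x *\<^sub>R u t x) t x = 0
    \<and> (\<chi> j. pdt (\<lambda>t x. \<rho> t x * u t x $ j) t x)
        + divm (\<lambda>t x. \<rho> t x *\<^sub>R outer (u t x) (u t x)) t x
        + grad (\<lambda>t x. \<rho> t x * \<Theta> t x * m1 t x) t x
        = \<epsilon> *\<^sub>R divm (\<lambda>t x. muF t x *\<^sub>R sigma u t x) t x
    \<and> pdt (\<lambda>t x. \<rho> t x * (norm (u t x))^2 + n * \<rho> t x * \<Theta> t x * m1 t x) t x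
        + divg (\<lambda>t x. (\<rho> t x * (norm (u t x))^2) *\<^sub>R u t x
                       + ((n + 2) * \<rho> t x * \<Theta> t x * m1 t x) *\<^sub>R u t x) t x
        = \<epsilon> * divg (\<lambda>t x. ((n + 2) * nuF t x * \<Theta> t x) *\<^sub>R grad chF t x
                         + (2 * kaF t x) *\<^sub>R grad \<Theta> t x
                         + (2 * muF t x) *\<^sub>R (sigma u t x *v u t x)) t x)"

definition entropic_system :: "(nat \<Rightarrow> real) \<Rightarrow> real \<Rightarrow> (real \<Rightarrow> real^'n \<Rightarrow> real) \<Rightarrow> (real \<Rightarrow> real^'n \<Rightarrow> real^'n)
     \<Rightarrow> (real \<Rightarrow> real^'n \<Rightarrow> real) \<Rightarrow> (real \<Rightarrow> real^'n \<Rightarrow> real) \<Rightarrow> real \<Rightarrow> real^'n \<Rightarrow> bool" where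
  "entropic_system \<gamma> \<epsilon> \<rho> u \<Theta> \<beta> t x \<longleftrightarrow>
    (\<forall>\<alpha>::'n eidx.
       pdt (\<lambda>t x. pSigma \<gamma> \<alpha> (Afield \<gamma> \<rho> u \<Theta> \<beta> t x)) t x
       + divg (\<lambda>t x. pPhi \<gamma> \<alpha> (Afield \<gamma> \<rho> u \<Theta> \<beta> t x)) t x
       = divg (\<lambda>t x. \<Sum>\<beta>'\<in>UNIV. Xfield \<gamma> \<epsilon> \<rho> u \<Theta> \<beta> t x \<alpha> \<beta>'
                         *v grad (\<lambda>t x. Afield \<gamma> \<rho> u \<Theta> \<beta> t x \<beta>') t x) t x)"

end

theory Submission
  imports Defs "HOL-Probability.Distributions"
begin


lemma gauss1_eq:
  fixes q p y :: real assumes q: "q > 0"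
  shows "exp (y * p - q * y\<^sup>2) = (sqrt (pi / q) * exp (p\<^sup>2 / (4 * q))) * normal_density (p / (2*q)) (sqrt (1/(2*q))) y"
proof -
  have s: "(sqrt (1/(2*q)))\<^sup>2 = 1/(2*q)" using q by simp
  have "normal_density (p / (2*q)) (sqrt (1/(2*q))) y = 1 / sqrt (pi / q) * exp (- q * (y - p/(2*q))\<^sup>2)"
    unfolding normal_density_def s using q by (simp add: field_simps)
  moreover have "sqrt (pi / q) > 0" using q by simp
  moreover have "p\<^sup>2 / (4 * q) + (- q * (y - p/(2*q))\<^sup>2) = y * p - q * y\<^sup>2"
    using q by (simp add: field_simps power2_eq_square)
  ultimately show ?thesis using q by (simp flip: exp_add)
qed

lemma gauss1:
  fixes q p :: real assumes q: "q > 0"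
  shows "has_bochner_integral lborel (\<lambda>y. exp (y * p - q * y\<^sup>2)) (sqrt (pi / q) * exp (p\<^sup>2 / (4 * q)))"
proof -
  have "sqrt (1/(2*q)) > 0" using q by simp
  then have "has_bochner_integral lborel (normal_density (p / (2*q)) (sqrt (1/(2*q)))) 1"
    using integrable_normal_density integral_normal_density
    by (metis has_bochner_integral_integrable)
  from has_bochner_integral_mult_right[OF this, of "sqrt (pi / q) * exp (p\<^sup>2 / (4 * q))"]
  show ?thesis by (simp add: gauss1_eq[OF q])
qed

lemma gauss1_mom:
  fixes q p :: real assumes q: "q > 0"
  shows "has_bochner_integral lborel (\<lambda>y. exp (y * p - q * y\<^sup>2) * y) (p / (2*q) * (sqrt (pi / q) * exp (p\<^sup>2 / (4 * q))))"
proof -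
  have "sqrt (1/(2*q)) > 0" using q by simp
  then have "has_bochner_integral lborel (\<lambda>y. normal_density (p / (2*q)) (sqrt (1/(2*q))) y * y) (p/(2*q))"
    by (rule normal_moment_nz_1)
  from has_bochner_integral_mult_right[OF this, of "sqrt (pi / q) * exp (p\<^sup>2 / (4 * q))"]
  show ?thesis by (simp add: gauss1_eq[OF q] mult_ac)
qed


lemma T_inner_Basis:
  fixes x :: "'a::euclidean_space \<Rightarrow> real"
  assumes "b \<in> Basis"
  shows "(\<Sum>c\<in>Basis. x c *\<^sub>R c) \<bullet> b = x b"
  using assms by (simp add: inner_sum_left inner_Basis if_distrib cong: if_cong)

lemma lborel_prod_integral:
  fixes g :: "'a::euclidean_space \<Rightarrow> real" and h :: "'a \<Rightarrow> real \<Rightarrow> real"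
  assumes int: "\<And>b. b\<in>Basis \<Longrightarrow> integrable lborel (h b)"
    and geq: "\<And>x. g x = (\<Prod>b\<in>Basis. h b (x \<bullet> b))"
  shows "has_bochner_integral lborel g (\<Prod>b\<in>Basis. integral\<^sup>L lborel (h b))"
proof -
  interpret product_sigma_finite "\<lambda>_::'a. lborel::real measure" by standard
  let ?P = "Pi\<^sub>M (Basis::'a set) (\<lambda>_. lborel::real measure)"
  let ?T = "\<lambda>f. \<Sum>b\<in>(Basis::'a set). f b *\<^sub>R b"
  have hm: "\<And>b. b\<in>Basis \<Longrightarrow> h b \<in> borel_measurable lborel" using int by auto
  have gm: "g \<in> borel_measurable borel"
  proof -
    have "(\<lambda>x. \<Prod>b\<in>Basis. h b (x \<bullet> b)) \<in> borel_measurable borel"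
      using hm by (intro borel_measurable_prod) (auto intro: measurable_compose[OF _ hm[simplified]])
    then show ?thesis using geq by (simp add: fun_eq_iff[symmetric] geq[abs_def])
  qed
  have Tm: "?T \<in> measurable ?P borel" by measurable
  have gT: "\<And>x. g (?T x) = (\<Prod>b\<in>Basis. h b (x b))"
    using geq T_inner_Basis by (simp cong: prod.cong)
  have i1: "integrable ?P (\<lambda>x. \<Prod>b\<in>Basis. h b (x b))"
    by (rule product_integrable_prod) (auto intro: int)
  have i2: "integral\<^sup>L ?P (\<lambda>x. \<Prod>b\<in>Basis. h b (x b)) = (\<Prod>b\<in>Basis. integral\<^sup>L lborel (h b))"
    by (rule product_integral_prod) (auto intro: int)
  have "integrable lborel g"
    apply (subst lborel_eq)
    apply (subst integrable_distr_eq[OF Tm gm])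
    using i1 gT by simp
  moreover have "integral\<^sup>L lborel g = (\<Prod>b\<in>Basis. integral\<^sup>L lborel (h b))"
    apply (subst lborel_eq)
    apply (subst integral_distr[OF Tm gm])
    using i2 gT by simp
  ultimately show ?thesis by (simp add: has_bochner_integral_iff)
qed


lemma norm_sq_Basis: "(norm (v::'a::euclidean_space))\<^sup>2 = (\<Sum>b\<in>Basis. (v \<bullet> b)\<^sup>2)"
  by (subst power2_norm_eq_inner) (simp add: euclidean_inner[of v v] power2_eq_square)

lemma gauss_prod_eq:
  fixes v p :: "'a::euclidean_space"
  shows "exp (v \<bullet> p - q * (norm v)\<^sup>2) = (\<Prod>b\<in>Basis. exp ((v \<bullet> b) * (p \<bullet> b) - q * (v \<bullet> b)\<^sup>2))"
proof -
  have "v \<bullet> p - q * (norm v)\<^sup>2 = (\<Sum>b\<in>Basis. (v \<bullet> b) * (p \<bullet> b) - q * (v \<bullet> b)\<^sup>2)"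
    by (simp add: norm_sq_Basis euclidean_inner[of v p] sum_subtractf sum_distrib_left)
  then show ?thesis by (simp add: exp_sum)
qed

lemma sqrt_pow_powr: "x > 0 \<Longrightarrow> sqrt x ^ n = x powr (real n / 2)"
  by (simp add: powr_half_sqrt[symmetric] powr_realpow[symmetric] powr_powr)

lemma gaussN_value:
  fixes p :: "'a::euclidean_space" assumes q: "q > 0"
  shows "(\<Prod>b\<in>Basis. sqrt (pi / q) * exp ((p \<bullet> b)\<^sup>2 / (4 * q)))
     = (pi / q) powr (real DIM('a) / 2) * exp ((norm p)\<^sup>2 / (4 * q))"
proof -
  have "(\<Prod>b\<in>(Basis::'a set). exp ((p \<bullet> b)\<^sup>2 / (4 * q))) = exp ((norm p)\<^sup>2 / (4 * q))"
    by (simp add: exp_sum[symmetric] norm_sq_Basis sum_divide_distrib)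
  then show ?thesis using q by (simp add: prod.distrib sqrt_pow_powr)
qed

lemma gaussN:
  fixes p :: "'a::euclidean_space" assumes q: "q > 0"
  shows "has_bochner_integral lborel (\<lambda>v. exp (v \<bullet> p - q * (norm v)\<^sup>2))
           ((pi / q) powr (real DIM('a) / 2) * exp ((norm p)\<^sup>2 / (4 * q)))"
proof -
  have "has_bochner_integral lborel (\<lambda>v. exp (v \<bullet> p - q * (norm v)\<^sup>2))
     (\<Prod>b\<in>Basis. integral\<^sup>L lborel (\<lambda>y. exp (y * (p \<bullet> b) - q * y\<^sup>2)))"
    by (rule lborel_prod_integral) (use integrable.intros[OF gauss1[OF q]] gauss_prod_eq in auto)
  moreover have "\<And>b. integral\<^sup>L lborel (\<lambda>y. exp (y * (p \<bullet> b) - q * y\<^sup>2)) = sqrt (pi / q) * exp ((p \<bullet> b)\<^sup>2 / (4 * q))"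
    using gauss1[OF q] by (simp add: has_bochner_integral_iff)
  ultimately show ?thesis using gaussN_value[OF q, of p] by simp
qed

lemma gaussN_comp:
  fixes p :: "'a::euclidean_space" assumes q: "q > 0" and b0: "b0 \<in> Basis"
  shows "has_bochner_integral lborel (\<lambda>v. exp (v \<bullet> p - q * (norm v)\<^sup>2) * (v \<bullet> b0))
           ((p \<bullet> b0) / (2 * q) * ((pi / q) powr (real DIM('a) / 2) * exp ((norm p)\<^sup>2 / (4 * q))))"
proof -
  define h where "h b = (if b = b0 then (\<lambda>y. exp (y * (p \<bullet> b) - q * y\<^sup>2) * y) else (\<lambda>y. exp (y * (p \<bullet> b) - q * y\<^sup>2)))" for b
  have I: "integral\<^sup>L lborel (h b) = (if b = b0 then (p \<bullet> b) / (2 * q) else 1) * (sqrt (pi / q) * exp ((p \<bullet> b)\<^sup>2 / (4 * q)))" for b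
    using gauss1[OF q] gauss1_mom[OF q] by (simp add: h_def has_bochner_integral_iff)
  have "has_bochner_integral lborel (\<lambda>v. exp (v \<bullet> p - q * (norm v)\<^sup>2) * (v \<bullet> b0)) (\<Prod>b\<in>Basis. integral\<^sup>L lborel (h b))"
  proof (rule lborel_prod_integral)
    show "integrable lborel (h b)" if "b \<in> Basis" for b
      using integrable.intros[OF gauss1[OF q]] integrable.intros[OF gauss1_mom[OF q]] by (auto simp: h_def)
    fix x :: 'a
    have "(\<Prod>b\<in>Basis. h b (x \<bullet> b)) = h b0 (x \<bullet> b0) * (\<Prod>b\<in>Basis - {b0}. h b (x \<bullet> b))"
      using b0 by (simp add: prod.remove)
    also have "\<dots> = (x \<bullet> b0) * (\<Prod>b\<in>Basis. exp ((x \<bullet> b) * (p \<bullet> b) - q * (x \<bullet> b)\<^sup>2))"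
      using b0 by (simp add: h_def prod.remove)
    finally show "exp (x \<bullet> p - q * (norm x)\<^sup>2) * (x \<bullet> b0) = (\<Prod>b\<in>Basis. h b (x \<bullet> b))"
      by (simp add: gauss_prod_eq)
  qed
  moreover have "(\<Prod>b\<in>Basis. integral\<^sup>L lborel (h b)) = (p \<bullet> b0) / (2 * q) * (\<Prod>b\<in>Basis. sqrt (pi / q) * exp ((p \<bullet> b)\<^sup>2 / (4 * q)))"
    using b0 by (simp add: I prod.distrib prod.If_cases Int_absorb1)
  ultimately show ?thesis using gaussN_value[OF q, of p] by simp
qed

lemma gaussN_vec:
  fixes p :: "'a::euclidean_space" assumes q: "q > 0"
  shows "has_bochner_integral lborel (\<lambda>v. exp (v \<bullet> p - q * (norm v)\<^sup>2) *\<^sub>R v)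
           (((pi / q) powr (real DIM('a) / 2) * exp ((norm p)\<^sup>2 / (4 * q)) / (2 * q)) *\<^sub>R p)"
proof -
  let ?T = "(pi / q) powr (real DIM('a) / 2) * exp ((norm p)\<^sup>2 / (4 * q))"
  have "has_bochner_integral lborel (\<lambda>v. \<Sum>b\<in>Basis. (exp (v \<bullet> p - q * (norm v)\<^sup>2) * (v \<bullet> b)) *\<^sub>R b)
          (\<Sum>b\<in>Basis. ((p \<bullet> b) / (2 * q) * ?T) *\<^sub>R b)"
    by (intro has_bochner_integral_sum has_bochner_integral_scaleR_left gaussN_comp[OF q]) simp
  moreover have "(\<lambda>v. \<Sum>b\<in>Basis. (exp (v \<bullet> p - q * (norm v)\<^sup>2) * (v \<bullet> b)) *\<^sub>R b) = (\<lambda>v. exp (v \<bullet> p - q * (norm v)\<^sup>2) *\<^sub>R v)"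
    by (simp add: scaleR_scaleR[symmetric] scaleR_sum_right[symmetric] euclidean_representation del: scaleR_scaleR)
  moreover have "(\<Sum>b\<in>Basis. ((p \<bullet> b) / (2 * q) * ?T) *\<^sub>R b) = (?T / (2 * q)) *\<^sub>R p"
  proof -
    have "(?T / (2 * q)) *\<^sub>R p = (?T / (2 * q)) *\<^sub>R (\<Sum>b\<in>Basis. (p \<bullet> b) *\<^sub>R b)"
      by (simp only: euclidean_representation)
    also have "\<dots> = (\<Sum>b\<in>Basis. ((p \<bullet> b) / (2 * q) * ?T) *\<^sub>R b)"
      by (simp only: scaleR_sum_right scaleR_scaleR) (intro sum.cong refl, simp)
    finally show ?thesis by simp
  qed
  ultimately show ?thesis by simp
qed


definition cf :: "(nat \<Rightarrow> real) \<Rightarrow> nat \<Rightarrow> nat \<Rightarrow> real" where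
  "cf \<gamma> j n = (if n = 0 then 0 else real n ^ j / (real n * \<gamma> n))"

definition Ser :: "(nat \<Rightarrow> real) \<Rightarrow> nat \<Rightarrow> real \<Rightarrow> real" where
  "Ser \<gamma> j b = (\<Sum>n. cf \<gamma> j n * exp b ^ n)"

lemma cf_0 [simp]: "cf \<gamma> j 0 = 0" by (simp add: cf_def)

lemma cf_nonneg: "\<forall>m\<ge>1. \<gamma> m > 0 \<Longrightarrow> cf \<gamma> j n \<ge> 0"
  by (cases "n = 0") (auto simp: cf_def intro!: divide_nonneg_pos)

lemma cf_pos: "\<forall>m\<ge>1. \<gamma> m > 0 \<Longrightarrow> n \<ge> 1 \<Longrightarrow> cf \<gamma> j n > 0"
  by (auto simp: cf_def intro!: divide_pos_pos)

lemma diffs_cf: "diffs (cf \<gamma> j) n = cf \<gamma> (Suc j) (Suc n)"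
  by (simp add: diffs_def cf_def field_simps del: of_nat_Suc)

lemma interior_Sset_bigger:
  assumes "b \<in> interior (Sset \<gamma>)" shows "\<exists>b1>b. b1 \<in> Sset \<gamma>"
proof -
  from assms obtain e where e: "e > 0" "ball b e \<subseteq> Sset \<gamma>"
    by (meson mem_interior)
  then have "b + e/2 \<in> Sset \<gamma>" by (auto simp: dist_real_def)
  then show ?thesis using e by (intro exI[of _ "b + e/2"]) auto
qed

lemma exp_nat: "exp (b * real m) = exp b ^ m"
  by (metis exp_of_nat_mult mult.commute)

lemma wgt_cf: "wgt \<gamma> b (Suc m) = cf \<gamma> 2 (Suc m) * exp b ^ Suc m"
  by (simp add: wgt_def cf_def exp_nat power2_eq_square mult.commute del: of_nat_Suc)

lemma Sset_summable2: "b \<in> Sset \<gamma> \<Longrightarrow> summable (\<lambda>n. cf \<gamma> 2 n * exp b ^ n)"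
proof -
  assume "b \<in> Sset \<gamma>"
  then have "summable (\<lambda>m. cf \<gamma> 2 (Suc m) * exp b ^ Suc m)"
    unfolding Sset_def by (simp only: mem_Collect_eq wgt_cf)
  then show ?thesis by (subst summable_Suc_iff[symmetric])
qed

lemma cf_le2:
  assumes g: "\<forall>m\<ge>1. \<gamma> m > 0" and j: "j \<le> 2"
  shows "cf \<gamma> j n \<le> cf \<gamma> 2 n"
proof (cases "n = 0")
  case False
  then have "real n ^ j \<le> real n ^ 2" using j by (intro power_increasing) auto
  moreover have "\<gamma> n > 0" using g False by auto
  ultimately show ?thesis using False by (auto simp: cf_def intro!: divide_right_mono)
qed simp

lemma summable_cf_low:
  assumes g: "\<forall>m\<ge>1. \<gamma> m > 0" and b1: "b1 \<in> Sset \<gamma>" and z: "norm z < exp b1" and j: "j \<le> 2"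
  shows "summable (\<lambda>n. cf \<gamma> j n * z ^ n)"
proof (rule summable_comparison_test)
  have "summable (\<lambda>n. norm (cf \<gamma> 2 n * z ^ n))"
    by (rule powser_insidea[OF Sset_summable2[OF b1]]) (use z in simp)
  then show "summable (\<lambda>n. norm (cf \<gamma> 2 n * z ^ n))" .
  show "\<exists>N. \<forall>n\<ge>N. norm (cf \<gamma> j n * z ^ n) \<le> norm (cf \<gamma> 2 n * z ^ n)"
    using cf_le2[OF g j] cf_nonneg[OF g]
    by (auto simp: abs_mult intro!: mult_right_mono)
qed

lemma summable_cf_step:
  assumes "\<And>z. norm z < R \<Longrightarrow> summable (\<lambda>n. cf \<gamma> j n * z ^ n)" and z: "norm z < R"
  shows "summable (\<lambda>n. cf \<gamma> (Suc j) n * z ^ n)"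
proof -
  have "summable (\<lambda>n. diffs (cf \<gamma> j) n * z ^ n)"
    by (rule termdiff_converges[OF z assms(1)])
  then have "summable (\<lambda>n. (cf \<gamma> (Suc j) (Suc n) * z ^ n) * z)"
    by (intro summable_mult2) (simp add: diffs_cf)
  then have "summable (\<lambda>n. cf \<gamma> (Suc j) (Suc n) * z ^ (Suc n))"
    by (simp add: mult_ac)
  then show ?thesis by (subst summable_Suc_iff[symmetric])
qed

lemma summable_cf:
  assumes g: "\<forall>m\<ge>1. \<gamma> m > 0" and b1: "b1 \<in> Sset \<gamma>" and z: "norm z < exp b1"
  shows "summable (\<lambda>n. cf \<gamma> j n * z ^ n)"
  using z
proof (induction j arbitrary: z)
  case 0 then show ?case using summable_cf_low[OF g b1] by simp
next
  case (Suc j)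
  show ?case
  proof (cases "Suc j \<le> 2")
    case True then show ?thesis using summable_cf_low[OF g b1 Suc.prems] by simp
  next
    case False
    show ?thesis by (rule summable_cf_step[OF Suc.IH Suc.prems])
  qed
qed

lemma Ser_summable:
  assumes g: "\<forall>m\<ge>1. \<gamma> m > 0" and b: "b \<in> interior (Sset \<gamma>)"
  shows "summable (\<lambda>n. cf \<gamma> j n * exp b ^ n)"
proof -
  obtain b1 where "b1 > b" "b1 \<in> Sset \<gamma>" using interior_Sset_bigger[OF b] by blast
  then show ?thesis by (intro summable_cf[OF g]) auto
qed

lemma Ser_pos:
  assumes g: "\<forall>m\<ge>1. \<gamma> m > 0" and b: "b \<in> interior (Sset \<gamma>)"
  shows "Ser \<gamma> j b > 0"
  unfolding Ser_def
  by (rule suminf_pos2[OF Ser_summable[OF g b], of _ 1])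
     (use cf_nonneg[OF g] cf_pos[OF g] in auto)

lemma Ser_deriv:
  assumes g: "\<forall>m\<ge>1. \<gamma> m > 0" and b: "b \<in> interior (Sset \<gamma>)"
  shows "(Ser \<gamma> j has_real_derivative Ser \<gamma> (Suc j) b) (at b)"
proof -
  obtain b1 where b1: "b1 > b" "b1 \<in> Sset \<gamma>" using interior_Sset_bigger[OF b] by blast
  have "((\<lambda>z. \<Sum>n. cf \<gamma> j n * z ^ n) has_real_derivative (\<Sum>n. diffs (cf \<gamma> j) n * exp b ^ n)) (at (exp b))"
    by (rule termdiffs_strong'[of "exp b1"]) (use b1 summable_cf[OF g b1(2)] in auto)
  from DERIV_chain2[OF this DERIV_exp]
  have d: "(Ser \<gamma> j has_real_derivative (\<Sum>n. diffs (cf \<gamma> j) n * exp b ^ n) * exp b) (at b)"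
    unfolding Ser_def by simp
  have sm: "summable (\<lambda>n. cf \<gamma> (Suc j) n * exp b ^ n)" by (rule Ser_summable[OF g b])
  have "(\<Sum>n. diffs (cf \<gamma> j) n * exp b ^ n) * exp b = (\<Sum>n. cf \<gamma> (Suc j) (Suc n) * exp b ^ Suc n)"
  proof -
    have "summable (\<lambda>n. diffs (cf \<gamma> j) n * exp b ^ n)"
      using sm by (subst (asm) summable_Suc_iff[symmetric]) (simp add: diffs_cf summable_mult2 mult_ac)
    then show ?thesis
      by (subst suminf_mult2) (simp_all add: diffs_cf mult_ac)
  qed
  also have "\<dots> = Ser \<gamma> (Suc j) b"
    unfolding Ser_def using suminf_split_head[OF sm] by simp
  finally show ?thesis using d by simp
qed

lemma Ser_shift:
  assumes "summable (\<lambda>n. cf \<gamma> j n * exp b ^ n)"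
  shows "(\<Sum>m. cf \<gamma> j (Suc m) * exp b ^ Suc m) = Ser \<gamma> j b"
  unfolding Ser_def using suminf_split_head[OF assms] by simp

lemma Wsum_Ser:
  assumes g: "\<forall>m\<ge>1. \<gamma> m > 0" and b: "b \<in> interior (Sset \<gamma>)"
  shows "Wsum \<gamma> b = Ser \<gamma> 2 b"
  unfolding Wsum_def wgt_cf by (rule Ser_shift[OF Ser_summable[OF g b]])

lemma avg1_Ser:
  assumes g: "\<forall>m\<ge>1. \<gamma> m > 0" and b: "b \<in> interior (Sset \<gamma>)"
  shows "avg \<gamma> b (\<lambda>m. 1 / real m) = Ser \<gamma> 1 b / Ser \<gamma> 2 b"
proof -
  have e: "(\<lambda>m. wgt \<gamma> b (Suc m) * (1 / real (Suc m))) = (\<lambda>m. cf \<gamma> 1 (Suc m) * exp b ^ Suc m)"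
    apply (rule ext)
    by (simp add: wgt_def cf_def exp_nat mult.commute del: of_nat_Suc)
  show ?thesis unfolding avg_def e Ser_shift[OF Ser_summable[OF g b]] Wsum_Ser[OF g b] ..
qed

lemma avg2_Ser:
  assumes g: "\<forall>m\<ge>1. \<gamma> m > 0" and b: "b \<in> interior (Sset \<gamma>)"
  shows "avg \<gamma> b (\<lambda>m. 1 / (real m)\<^sup>2) = Ser \<gamma> 0 b / Ser \<gamma> 2 b"
proof -
  have e: "(\<lambda>m. wgt \<gamma> b (Suc m) * (1 / (real (Suc m))\<^sup>2)) = (\<lambda>m. cf \<gamma> 0 (Suc m) * exp b ^ Suc m)"
    apply (rule ext)
    by (simp add: wgt_def cf_def exp_nat power2_eq_square field_simps del: of_nat_Suc)
  show ?thesis unfolding avg_def e Ser_shift[OF Ser_summable[OF g b]] Wsum_Ser[OF g b] ..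
qed


definition Dvec :: "('n::finite eidx \<Rightarrow> real) \<Rightarrow> real^'n" where
  "Dvec a = (\<chi> i. a (EDi i))"

definition bbv :: "('n::finite eidx \<Rightarrow> real) \<Rightarrow> real" where
  "bbv a = a EB + (norm (Dvec a))\<^sup>2 / (4 * (- a EC))"

definition Gcl :: "(nat \<Rightarrow> real) \<Rightarrow> ('n::finite eidx \<Rightarrow> real) \<Rightarrow> real" where
  "Gcl \<gamma> a = (pi / (- a EC)) powr (real CARD('n) / 2) * exp (a EA) * Ser \<gamma> 1 (bbv a)"

lemma mudot_eq:
  "mudot m v a = (a EA + real m * a EB) + (v \<bullet> (real m *\<^sub>R Dvec a) - (real m * (- a EC)) * (norm v)\<^sup>2)"
  by (simp add: mudot_def Dvec_def algebra_simps)

lemma term_value: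
  fixes a :: "'n::finite eidx \<Rightarrow> real"
  assumes K: "a EC < 0" and m: "m > 0"
  shows "real m powr (real CARD('n) / 2) / \<gamma> m * exp (a EA + real m * a EB) *
           ((pi / (real m * (- a EC))) powr (real CARD('n) / 2) *
            exp ((norm (real m *\<^sub>R Dvec a))\<^sup>2 / (4 * (real m * (- a EC)))))
         = (pi / (- a EC)) powr (real CARD('n) / 2) * exp (a EA) * (cf \<gamma> 1 m * exp (bbv a) ^ m)"
proof -
  have p: "real m powr (real CARD('n) / 2) * (pi / (real m * (- a EC))) powr (real CARD('n) / 2)
      = (pi / (- a EC)) powr (real CARD('n) / 2)"
    using K m by (simp add: powr_mult[symmetric])
  have e: "exp (a EA + real m * a EB) * exp ((norm (real m *\<^sub>R Dvec a))\<^sup>2 / (4 * (real m * (- a EC))))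
      = exp (a EA) * exp (bbv a) ^ m"
  proof -
    have "(norm (real m *\<^sub>R Dvec a))\<^sup>2 / (4 * (real m * (- a EC))) = real m * ((norm (Dvec a))\<^sup>2 / (4 * (- a EC)))"
      using K m by (simp add: power_mult_distrib field_simps power2_eq_square)
    then show ?thesis
      by (simp add: bbv_def exp_add[symmetric] exp_nat[symmetric] algebra_simps)
  qed
  have c: "cf \<gamma> 1 m = 1 / \<gamma> m" using m by (simp add: cf_def)
  have alg: "P1 / g * E1 * (P2 * E2) = (P1 * P2) * (E1 * E2) * (1 / g)" for P1 P2 E1 E2 g :: real
    by (cases "g = 0") (simp_all add: field_simps)
  have alg2: "Z * (EA * EB) * (1/g) = Z * EA * (1/g * EB)" for Z EA EB g :: real
    by (simp add: mult_ac)
  show ?thesis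
    apply (subst alg)
    apply (subst p)
    apply (subst e)
    apply (subst c)
    apply (rule alg2)
    done
qed

lemma alg3: "(m::real) \<noteq> 0 \<Longrightarrow> c *\<^sub>R ((T / (2 * (m * K))) *\<^sub>R (m *\<^sub>R (D::'a::real_vector))) = (c * T / (2 * K)) *\<^sub>R D"
  by (simp add: scaleR_scaleR field_simps)

lemma dimn: "DIM(real^'n::finite) = CARD('n)" by simp

lemma term_int:
  fixes a :: "'n::finite eidx \<Rightarrow> real"
  assumes K: "a EC < 0" and m: "m > 0"
  shows "has_bochner_integral lborel (\<lambda>v::real^'n. real m powr (real CARD('n) / 2) / \<gamma> m * exp (mudot m v a))
           ((pi / (- a EC)) powr (real CARD('n) / 2) * exp (a EA) * (cf \<gamma> 1 m * exp (bbv a) ^ m))"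
proof -
  define c where "c = real m powr (real CARD('n) / 2) / \<gamma> m * exp (a EA + real m * a EB)"
  define q where "q = real m * (- a EC)"
  define p where "p = real m *\<^sub>R Dvec a"
  have q: "q > 0" unfolding q_def using K m by (intro mult_pos_pos) auto
  have h: "has_bochner_integral lborel (\<lambda>v::real^'n. c * exp (v \<bullet> p - q * (norm v)\<^sup>2))
     (c * ((pi / q) powr (real CARD('n) / 2) * exp ((norm p)\<^sup>2 / (4 * q))))"
    using has_bochner_integral_mult_right[OF gaussN[OF q, of p], of c] by (simp only: dimn)
  have f: "(\<lambda>v::real^'n. real m powr (real CARD('n) / 2) / \<gamma> m * exp (mudot m v a)) = (\<lambda>v. c * exp (v \<bullet> p - q * (norm v)\<^sup>2))"
    by (rule ext) (simp only: c_def p_def q_def mudot_eq exp_add mult.assoc)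
  have v: "c * ((pi / q) powr (real CARD('n) / 2) * exp ((norm p)\<^sup>2 / (4 * q))) = (pi / (- a EC)) powr (real CARD('n) / 2) * exp (a EA) * (cf \<gamma> 1 m * exp (bbv a) ^ m)"
    unfolding c_def p_def q_def by (rule term_value[where a=a and \<gamma>=\<gamma> and m=m, OF K m])
  from h have "has_bochner_integral lborel (\<lambda>v::real^'n. c * exp (v \<bullet> p - q * (norm v)\<^sup>2)) ((pi / (- a EC)) powr (real CARD('n) / 2) * exp (a EA) * (cf \<gamma> 1 m * exp (bbv a) ^ m))"
    by (simp only: v)
  then show ?thesis using f by (metis (no_types))
qed

lemma term_int_vec:
  fixes a :: "'n::finite eidx \<Rightarrow> real"
  assumes K: "a EC < 0" and m: "m > 0"
  shows "has_bochner_integral lborel (\<lambda>v::real^'n. (real m powr (real CARD('n) / 2) / \<gamma> m * exp (mudot m v a)) *\<^sub>R v)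
           (((pi / (- a EC)) powr (real CARD('n) / 2) * exp (a EA) * (cf \<gamma> 1 m * exp (bbv a) ^ m) / (2 * (- a EC))) *\<^sub>R Dvec a)"
proof -
  define c where "c = real m powr (real CARD('n) / 2) / \<gamma> m * exp (a EA + real m * a EB)"
  define q where "q = real m * (- a EC)"
  define p where "p = real m *\<^sub>R Dvec a"
  have q: "q > 0" unfolding q_def using K m by (intro mult_pos_pos) auto
  have h: "has_bochner_integral lborel (\<lambda>v::real^'n. c *\<^sub>R (exp (v \<bullet> p - q * (norm v)\<^sup>2) *\<^sub>R v))
     (c *\<^sub>R (((pi / q) powr (real CARD('n) / 2) * exp ((norm p)\<^sup>2 / (4 * q)) / (2 * q)) *\<^sub>R p))"
    using has_bochner_integral_scaleR_right[OF gaussN_vec[OF q, of p], of c] by (simp only: dimn)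
  have f: "(\<lambda>v::real^'n. (real m powr (real CARD('n) / 2) / \<gamma> m * exp (mudot m v a)) *\<^sub>R v) = (\<lambda>v. c *\<^sub>R (exp (v \<bullet> p - q * (norm v)\<^sup>2) *\<^sub>R v))"
  proof (rule ext)
    fix v :: "real^'n"
    have e: "exp (mudot m v a) = exp (a EA + real m * a EB) * exp (v \<bullet> p - q * (norm v)\<^sup>2)"
      by (simp only: p_def q_def mudot_eq exp_add[symmetric])
    show "(real m powr (real CARD('n) / 2) / \<gamma> m * exp (mudot m v a)) *\<^sub>R v = c *\<^sub>R (exp (v \<bullet> p - q * (norm v)\<^sup>2) *\<^sub>R v)"
      unfolding e c_def scaleR_scaleR by (simp only: mult.assoc)
  qed
  have v0: "c * ((pi / q) powr (real CARD('n) / 2) * exp ((norm p)\<^sup>2 / (4 * q))) = (pi / (- a EC)) powr (real CARD('n) / 2) * exp (a EA) * (cf \<gamma> 1 m * exp (bbv a) ^ m)"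
    unfolding c_def p_def q_def by (rule term_value[where a=a and \<gamma>=\<gamma> and m=m, OF K m])
  have v: "c *\<^sub>R (((pi / q) powr (real CARD('n) / 2) * exp ((norm p)\<^sup>2 / (4 * q)) / (2 * q)) *\<^sub>R p)
     = ((c * ((pi / q) powr (real CARD('n) / 2) * exp ((norm p)\<^sup>2 / (4 * q)))) / (2 * (- a EC))) *\<^sub>R Dvec a"
    unfolding p_def q_def by (rule alg3) (use m in simp)
  from h have "has_bochner_integral lborel (\<lambda>v::real^'n. c *\<^sub>R (exp (v \<bullet> p - q * (norm v)\<^sup>2) *\<^sub>R v)) (((pi / (- a EC)) powr (real CARD('n) / 2) * exp (a EA) * (cf \<gamma> 1 m * exp (bbv a) ^ m) / (2 * (- a EC))) *\<^sub>R Dvec a)"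
    by (simp only: v v0)
  then show ?thesis using f by (metis (no_types))
qed

lemma Sigma_closed:
  fixes a :: "'n::finite eidx \<Rightarrow> real"
  assumes K: "a EC < 0" and sm: "summable (\<lambda>n. cf \<gamma> 1 n * exp (bbv a) ^ n)"
  shows "Sigma_f \<gamma> a = Gcl \<gamma> a"
proof -
  let ?P = "(pi / (- a EC)) powr (real CARD('n) / 2) * exp (a EA)"
  have "Sigma_f \<gamma> a = (\<Sum>m. ?P * (cf \<gamma> 1 (Suc m) * exp (bbv a) ^ Suc m))"
    unfolding Sigma_f_def
    by (rule arg_cong[where f=suminf], rule ext, rule has_bochner_integral_integral_eq,
        rule term_int[where a=a and \<gamma>=\<gamma>, OF K], simp)
  also have "\<dots> = ?P * (\<Sum>m. cf \<gamma> 1 (Suc m) * exp (bbv a) ^ Suc m)"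
    by (rule suminf_mult[OF summable_Suc_iff[where f="\<lambda>n. cf \<gamma> 1 n * exp (bbv a) ^ n", THEN iffD2, OF sm]])
  also have "\<dots> = Gcl \<gamma> a" unfolding Gcl_def Ser_shift[OF sm] ..
  finally show ?thesis .
qed

lemma Phi_closed:
  fixes a :: "'n::finite eidx \<Rightarrow> real"
  assumes K: "a EC < 0" and sm: "summable (\<lambda>n. cf \<gamma> 1 n * exp (bbv a) ^ n)"
  shows "Phi_f \<gamma> a = (Gcl \<gamma> a / (2 * (- a EC))) *\<^sub>R Dvec a"
proof -
  let ?P = "(pi / (- a EC)) powr (real CARD('n) / 2) * exp (a EA)"
  have "Phi_f \<gamma> a = (\<Sum>m. (?P * (cf \<gamma> 1 (Suc m) * exp (bbv a) ^ Suc m) / (2 * (- a EC))) *\<^sub>R Dvec a)"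
    unfolding Phi_f_def
    by (rule arg_cong[where f=suminf], rule ext, rule has_bochner_integral_integral_eq,
        rule term_int_vec[where a=a and \<gamma>=\<gamma>, OF K], simp)
  also have "\<dots> = (Gcl \<gamma> a / (2 * (- a EC))) *\<^sub>R Dvec a"
  proof -
    have sm1: "summable (\<lambda>m. cf \<gamma> 1 (Suc m) * exp (bbv a) ^ Suc m)"
      by (rule summable_Suc_iff[where f="\<lambda>n. cf \<gamma> 1 n * exp (bbv a) ^ n", THEN iffD2, OF sm])
    have s1: "(\<lambda>m. cf \<gamma> 1 (Suc m) * exp (bbv a) ^ Suc m) sums Ser \<gamma> 1 (bbv a)"
      using summable_sums[OF sm1] unfolding Ser_shift[OF sm] .
    have "(\<lambda>m. ?P * (cf \<gamma> 1 (Suc m) * exp (bbv a) ^ Suc m) / (2 * (- a EC))) sums (?P * Ser \<gamma> 1 (bbv a) / (2 * (- a EC)))"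
      by (intro sums_divide sums_mult s1)
    from sums_scaleR_left[OF this, of "Dvec a"] show ?thesis
      unfolding Gcl_def by (rule sums_unique[symmetric])
  qed
  finally show ?thesis .
qed


lemma deriv_ev:
  assumes "(g has_real_derivative D) (at 0)" "eventually (\<lambda>s. f s = g s) (nhds 0)"
  shows "deriv f 0 = D"
proof -
  have "(f has_real_derivative D) (at 0)"
    using assms(1) DERIV_cong_ev[OF refl assms(2) refl] by simp
  then show ?thesis by (rule DERIV_imp_deriv)
qed

lemma vderiv_ev:
  fixes f g :: "real \<Rightarrow> 'a::real_normed_vector"
  assumes "(g has_vector_derivative D) (at 0)" "eventually (\<lambda>s. f s = g s) (nhds 0)"
  shows "vector_derivative f (at 0) = D"
proof -
  have e: "eventually (\<lambda>s. s \<in> UNIV \<longrightarrow> f s = g s) (nhds 0)" using assms(2) by simp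
  have "f 0 = g 0" using assms(2) by (simp add: eventually_nhds_conv_at)
  then have "(f has_vector_derivative D) (at 0)"
    using assms(1) has_vector_derivative_cong_ev[OF e] by simp
  then show ?thesis by (rule vector_derivative_at)
qed

lemma ev_in_open:
  fixes f :: "real \<Rightarrow> 'b::topological_space"
  assumes "isCont f 0" "open S" "f 0 \<in> S"
  shows "eventually (\<lambda>s. f s \<in> S) (nhds 0)"
proof -
  have "eventually (\<lambda>s. f s \<in> S) (at 0)"
    using assms by (intro topological_tendstoD) (auto simp: isCont_def)
  then show ?thesis using assms(3) by (simp add: eventually_nhds_conv_at)
qed

definition dv :: "'n::finite eidx \<Rightarrow> real^'n" where
  "dv \<alpha> = (\<chi> i. if \<alpha> = EDi i then 1 else 0)"

lemma Dvec_upd: "Dvec (a(\<alpha> := a \<alpha> + s)) = Dvec a + s *\<^sub>R dv \<alpha>"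
  by (simp add: Dvec_def dv_def vec_eq_iff)


lemma ev_valid:
  fixes a :: "'n::finite eidx \<Rightarrow> real"
  assumes K: "a EC < 0" and b: "bbv a \<in> interior (Sset \<gamma>)"
  shows "eventually (\<lambda>s. (a(\<alpha> := a \<alpha> + s)) EC < 0 \<and> bbv (a(\<alpha> := a \<alpha> + s)) \<in> interior (Sset \<gamma>)) (nhds 0)"
proof -
  define k where "k = (if EC = \<alpha> then 1 else (0::real))"
  define kb where "kb = (if EB = \<alpha> then 1 else (0::real))"
  have ec: "(a(\<alpha> := a \<alpha> + s)) EC = a EC + s * k" for s by (auto simp: k_def)
  have bb: "bbv (a(\<alpha> := a \<alpha> + s)) = (a EB + s * kb) + (norm (Dvec a + s *\<^sub>R dv \<alpha>))\<^sup>2 / (4 * (- (a EC + s * k)))" for s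
    unfolding bbv_def Dvec_upd ec by (auto simp: kb_def)
  have c1: "isCont (\<lambda>s. a EC + s * k) 0" by (intro continuous_intros)
  have e1: "eventually (\<lambda>s. a EC + s * k \<in> {..<0}) (nhds 0)"
    by (rule ev_in_open[OF c1]) (use K in auto)
  have c2: "isCont (\<lambda>s. (a EB + s * kb) + (norm (Dvec a + s *\<^sub>R dv \<alpha>))\<^sup>2 / (4 * (- (a EC + s * k)))) 0"
    using K by (intro continuous_intros) auto
  have e2: "eventually (\<lambda>s. (a EB + s * kb) + (norm (Dvec a + s *\<^sub>R dv \<alpha>))\<^sup>2 / (4 * (- (a EC + s * k))) \<in> interior (Sset \<gamma>)) (nhds 0)"
    by (rule ev_in_open[OF c2]) (use b in \<open>auto simp: bbv_def\<close>)
  show ?thesis using e1 e2 unfolding ec bb by eventually_elim auto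
qed

lemma Sigma_ev:
  fixes a :: "'n::finite eidx \<Rightarrow> real"
  assumes g: "\<forall>m\<ge>1. \<gamma> m > 0" and K: "a EC < 0" and b: "bbv a \<in> interior (Sset \<gamma>)"
  shows "eventually (\<lambda>s. Sigma_f \<gamma> (a(\<alpha> := a \<alpha> + s)) = Gcl \<gamma> (a(\<alpha> := a \<alpha> + s))) (nhds 0)"
  using ev_valid[OF K b, of \<alpha>]
  by (rule eventually_mono) (rule Sigma_closed, simp, rule Ser_summable[OF g], simp)

lemma Phi_ev:
  fixes a :: "'n::finite eidx \<Rightarrow> real"
  assumes g: "\<forall>m\<ge>1. \<gamma> m > 0" and K: "a EC < 0" and b: "bbv a \<in> interior (Sset \<gamma>)"
  shows "eventually (\<lambda>s. Phi_f \<gamma> (a(\<alpha> := a \<alpha> + s)) =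
            (Gcl \<gamma> (a(\<alpha> := a \<alpha> + s)) / (2 * (- (a(\<alpha> := a \<alpha> + s)) EC))) *\<^sub>R Dvec (a(\<alpha> := a \<alpha> + s))) (nhds 0)"
  using ev_valid[OF K b, of \<alpha>]
  by (rule eventually_mono) (rule Phi_closed, simp, rule Ser_summable[OF g], simp)


abbreviation "upd a \<alpha> s \<equiv> a(\<alpha> := a \<alpha> + s)"

lemma Ser1_chain:
  assumes g: "\<forall>m\<ge>1. \<gamma> m > 0" and h: "(h has_real_derivative h') (at 0)" and b: "h 0 \<in> interior (Sset \<gamma>)"
  shows "((\<lambda>s. Ser \<gamma> 1 (h s)) has_real_derivative Ser \<gamma> 2 (h 0) * h') (at 0)"
  using DERIV_chain2[OF Ser_deriv[OF g b, of 1] h] by (simp add: numeral_2_eq_2)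

lemma norm_upd_sq:
  fixes D :: "real^'n::finite"
  shows "(norm (D + s *\<^sub>R axis i 1))\<^sup>2 = (norm D)\<^sup>2 + 2 * s * (D $ i) + s\<^sup>2"
proof -
  have "(norm (D + s *\<^sub>R axis i 1))\<^sup>2 = (D + s *\<^sub>R axis i 1) \<bullet> (D + s *\<^sub>R axis i 1)"
    by (rule power2_norm_eq_inner)
  also have "\<dots> = D \<bullet> D + 2 * s * (D $ i) + s\<^sup>2"
    by (simp add: inner_add_left inner_add_right inner_axis inner_commute[of "axis i 1"] power2_eq_square algebra_simps)
  also have "D \<bullet> D = (norm D)\<^sup>2" by (rule power2_norm_eq_inner[symmetric])
  finally show ?thesis .
qed

lemma dv_EDi: "dv (EDi i) = axis i 1" by (simp add: dv_def axis_def vec_eq_iff)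
lemma dv_EA: "dv EA = 0" by (simp add: dv_def vec_eq_iff)
lemma dv_EB: "dv EB = 0" by (simp add: dv_def vec_eq_iff)
lemma dv_EC: "dv EC = 0" by (simp add: dv_def vec_eq_iff)

lemma alg_powr:
  assumes Kp: "K > 0" shows "r * (pi / K) powr (r - 1) * (pi / K\<^sup>2) = r * (pi / K) powr r / K"
proof -
  have pk: "pi / K > 0" using Kp by simp
  have "(pi / K) powr (r - 1) = (pi / K) powr r / (pi / K)"
    using powr_diff[of "pi / K" r 1] pk Kp by simp
  then show ?thesis using Kp by (simp add: field_simps power2_eq_square)
qed

context
  fixes \<gamma> :: "nat \<Rightarrow> real" and a :: "'n::finite eidx \<Rightarrow> real"
  assumes g: "\<forall>m\<ge>1. \<gamma> m > 0" and K: "a EC < 0" and b: "bbv a \<in> interior (Sset \<gamma>)"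
begin


lemma G_EA: "((\<lambda>s. Gcl \<gamma> (upd a EA s)) has_real_derivative Gcl \<gamma> a) (at 0)"
proof -
  have e: "(\<lambda>s. Gcl \<gamma> (upd a EA s)) = (\<lambda>s. (pi / (- a EC)) powr (real CARD('n) / 2) * exp (a EA + s) * Ser \<gamma> 1 (bbv a))"
    by (rule ext) (simp add: Gcl_def bbv_def Dvec_def)
  show ?thesis unfolding e
    by (auto intro!: derivative_eq_intros simp: Gcl_def)
qed

lemma G_EB: "((\<lambda>s. Gcl \<gamma> (upd a EB s)) has_real_derivative ((pi / (- a EC)) powr (real CARD('n) / 2) * exp (a EA)) * Ser \<gamma> 2 (bbv a)) (at 0)"
proof -
  have bb: "bbv (upd a EB s) = bbv a + s" for s by (simp add: bbv_def Dvec_def)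
  have e: "(\<lambda>s. Gcl \<gamma> (upd a EB s)) = (\<lambda>s. ((pi / (- a EC)) powr (real CARD('n) / 2) * exp (a EA)) * Ser \<gamma> 1 (bbv a + s))"
    by (rule ext) (simp only: Gcl_def bb, simp)
  have h: "((\<lambda>s. bbv a + s) has_real_derivative 1) (at 0)" by (auto intro!: derivative_eq_intros)
  have "((\<lambda>s. Ser \<gamma> 1 (bbv a + s)) has_real_derivative Ser \<gamma> 2 (bbv a) * 1) (at 0)"
    using Ser1_chain[OF g h] b by simp
  then show ?thesis unfolding e
    by (auto intro!: derivative_eq_intros)
qed

lemma G_ED: "((\<lambda>s. Gcl \<gamma> (upd a (EDi i) s)) has_real_derivative ((pi / (- a EC)) powr (real CARD('n) / 2) * exp (a EA)) * Ser \<gamma> 2 (bbv a) * (Dvec a $ i / (2 * (- a EC)))) (at 0)"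
proof -
  have e: "(\<lambda>s. Gcl \<gamma> (upd a (EDi i) s)) = (\<lambda>s. ((pi / (- a EC)) powr (real CARD('n) / 2) * exp (a EA)) * Ser \<gamma> 1 (a EB + ((norm (Dvec a))\<^sup>2 + 2 * s * (Dvec a $ i) + s\<^sup>2) / (4 * (- a EC))))"
    by (rule ext) (simp add: Gcl_def bbv_def Dvec_upd dv_EDi norm_upd_sq)
  have h: "((\<lambda>s. a EB + ((norm (Dvec a))\<^sup>2 + 2 * s * (Dvec a $ i) + s\<^sup>2) / (4 * (- a EC))) has_real_derivative (Dvec a $ i / (2 * (- a EC)))) (at 0)"
    using K by (auto intro!: derivative_eq_intros simp: field_simps)
  have "((\<lambda>s. Ser \<gamma> 1 (a EB + ((norm (Dvec a))\<^sup>2 + 2 * s * (Dvec a $ i) + s\<^sup>2) / (4 * (- a EC)))) has_real_derivative Ser \<gamma> 2 (bbv a) * (Dvec a $ i / (2 * (- a EC)))) (at 0)"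
    using Ser1_chain[OF g h] b by (simp add: bbv_def)
  then show ?thesis unfolding e
    by (auto intro!: derivative_eq_intros)
qed

lemma G_EC: "((\<lambda>s. Gcl \<gamma> (upd a EC s)) has_real_derivative (real CARD('n) / 2) / (- a EC) * Gcl \<gamma> a + ((pi / (- a EC)) powr (real CARD('n) / 2) * exp (a EA)) * Ser \<gamma> 2 (bbv a) * ((norm (Dvec a))\<^sup>2 / (4 * (- a EC)\<^sup>2))) (at 0)"
proof -
  have e: "(\<lambda>s. Gcl \<gamma> (upd a EC s)) = (\<lambda>s. (pi / ((- a EC) - s)) powr (real CARD('n) / 2) * exp (a EA) * Ser \<gamma> 1 (a EB + (norm (Dvec a))\<^sup>2 / (4 * ((- a EC) - s))))"
    by (rule ext) (simp add: Gcl_def bbv_def Dvec_def)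
  have h: "((\<lambda>s. a EB + (norm (Dvec a))\<^sup>2 / (4 * ((- a EC) - s))) has_real_derivative ((norm (Dvec a))\<^sup>2 / (4 * (- a EC)\<^sup>2))) (at 0)"
    using K by (auto intro!: derivative_eq_intros simp: field_simps power2_eq_square)
  have s: "((\<lambda>s. Ser \<gamma> 1 (a EB + (norm (Dvec a))\<^sup>2 / (4 * ((- a EC) - s)))) has_real_derivative Ser \<gamma> 2 (bbv a) * ((norm (Dvec a))\<^sup>2 / (4 * (- a EC)\<^sup>2))) (at 0)"
    using Ser1_chain[OF g h] b by (simp add: bbv_def)
  have q: "((\<lambda>s. pi / ((- a EC) - s)) has_real_derivative pi / (- a EC)\<^sup>2) (at 0)"
    using K by (auto intro!: derivative_eq_intros simp: field_simps power2_eq_square)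
  have p: "((\<lambda>s. (pi / ((- a EC) - s)) powr (real CARD('n) / 2)) has_real_derivative (real CARD('n) / 2) * (pi / (- a EC)) powr (real CARD('n) / 2) / (- a EC)) (at 0)"
  proof -
    have "((\<lambda>s. (pi / ((- a EC) - s)) powr (real CARD('n) / 2)) has_real_derivative (real CARD('n) / 2) * (pi / ((- a EC) - 0)) powr ((real CARD('n) / 2) - of_nat 1) * (pi / (- a EC)\<^sup>2)) (at 0)"
      by (rule DERIV_fun_powr[OF q]) (use K pi_gt_zero in \<open>simp add: divide_pos_neg\<close>)
    moreover have "(real CARD('n) / 2) * (pi / ((- a EC) - 0)) powr ((real CARD('n) / 2) - of_nat 1) * (pi / (- a EC)\<^sup>2) = (real CARD('n) / 2) * (pi / (- a EC)) powr (real CARD('n) / 2) / (- a EC)"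
      using alg_powr[of "- a EC" "real CARD('n) / 2"] K by simp
    ultimately show ?thesis by simp
  qed
  show ?thesis unfolding e
    apply (rule DERIV_cong[OF DERIV_mult[OF DERIV_mult[OF p DERIV_const] s]])
    unfolding Gcl_def bbv_def using K by (simp add: field_simps)
qed

end


lemma vd_scale:
  assumes "(f has_real_derivative f') (at 0)" "(g has_vector_derivative g') (at 0)"
  shows "((\<lambda>s. f s *\<^sub>R g s) has_vector_derivative (f 0 *\<^sub>R g' + f' *\<^sub>R g 0)) (at 0)"
  using has_vector_derivative_scaleR[OF assms] .

context
  fixes \<gamma> :: "nat \<Rightarrow> real" and a :: "'n::finite eidx \<Rightarrow> real"
  assumes g: "\<forall>m\<ge>1. \<gamma> m > 0" and K: "a EC < 0" and b: "bbv a \<in> interior (Sset \<gamma>)"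
begin

lemma pSigma_gen: "pSigma \<gamma> \<alpha> a = deriv (\<lambda>s. Gcl \<gamma> (upd a \<alpha> s)) 0"
  and pSigma_EA: "pSigma \<gamma> EA a = Gcl \<gamma> a"
  and pSigma_EB: "pSigma \<gamma> EB a = (pi / (- a EC)) powr (real CARD('n) / 2) * exp (a EA) * Ser \<gamma> 2 (bbv a)"
  and pSigma_ED: "pSigma \<gamma> (EDi i) a = (pi / (- a EC)) powr (real CARD('n) / 2) * exp (a EA) * Ser \<gamma> 2 (bbv a) * (Dvec a $ i / (2 * (- a EC)))"
  and pSigma_EC: "pSigma \<gamma> EC a = (real CARD('n) / 2) / (- a EC) * Gcl \<gamma> a + ((pi / (- a EC)) powr (real CARD('n) / 2) * exp (a EA)) * Ser \<gamma> 2 (bbv a) * ((norm (Dvec a))\<^sup>2 / (4 * (- a EC)\<^sup>2))"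
proof -
  have ev: "eventually (\<lambda>s. Sigma_f \<gamma> (upd a \<alpha> s) = Gcl \<gamma> (upd a \<alpha> s)) (nhds 0)" for \<alpha>
    by (rule Sigma_ev[OF g K b])
  have *: "((\<lambda>s. Gcl \<gamma> (upd a \<alpha> s)) has_real_derivative D) (at 0) \<Longrightarrow> pSigma \<gamma> \<alpha> a = D" for \<alpha> D
    unfolding pSigma_def by (rule deriv_ev[OF _ ev])
  show "pSigma \<gamma> \<alpha> a = deriv (\<lambda>s. Gcl \<gamma> (upd a \<alpha> s)) 0"
    unfolding pSigma_def by (intro deriv_cong_ev) (use ev in auto)
  show "pSigma \<gamma> EA a = Gcl \<gamma> a" by (rule *[OF G_EA[OF g K b]])
  show "pSigma \<gamma> EB a = (pi / (- a EC)) powr (real CARD('n) / 2) * exp (a EA) * Ser \<gamma> 2 (bbv a)" by (rule *[OF G_EB[OF g K b]])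
  show "pSigma \<gamma> (EDi i) a = (pi / (- a EC)) powr (real CARD('n) / 2) * exp (a EA) * Ser \<gamma> 2 (bbv a) * (Dvec a $ i / (2 * (- a EC)))" by (rule *[OF G_ED[OF g K b]])
  show "pSigma \<gamma> EC a = (real CARD('n) / 2) / (- a EC) * Gcl \<gamma> a + ((pi / (- a EC)) powr (real CARD('n) / 2) * exp (a EA)) * Ser \<gamma> 2 (bbv a) * ((norm (Dvec a))\<^sup>2 / (4 * (- a EC)\<^sup>2))" by (rule *[OF G_EC[OF g K b]])
qed

lemma pPhi_A: "\<alpha> \<noteq> EC \<Longrightarrow> pPhi \<gamma> \<alpha> a = (pSigma \<gamma> \<alpha> a / (2 * (- a EC))) *\<^sub>R Dvec a + (Gcl \<gamma> a / (2 * (- a EC))) *\<^sub>R dv \<alpha>"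
proof -
  assume ne: "\<alpha> \<noteq> EC"
  have ev: "eventually (\<lambda>s. Phi_f \<gamma> (upd a \<alpha> s) = (Gcl \<gamma> (upd a \<alpha> s) / (2 * (- a EC))) *\<^sub>R (Dvec a + s *\<^sub>R dv \<alpha>)) (nhds 0)"
    using Phi_ev[OF g K b, of \<alpha>] ne by (simp add: Dvec_upd)
  have dG: "((\<lambda>s. Gcl \<gamma> (upd a \<alpha> s)) has_real_derivative pSigma \<gamma> \<alpha> a) (at 0)"
  proof -
    have "((\<lambda>s. Gcl \<gamma> (upd a \<alpha> s)) has_real_derivative D) (at 0) \<Longrightarrow> ?thesis" for D
      using pSigma_gen[of \<alpha>] DERIV_imp_deriv by metis
    then show ?thesis
      by (cases \<alpha>) (use G_EA[OF g K b] G_EB[OF g K b] G_ED[OF g K b] ne in auto)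
  qed
  have "((\<lambda>s. (Gcl \<gamma> (upd a \<alpha> s) / (2 * (- a EC))) *\<^sub>R (Dvec a + s *\<^sub>R dv \<alpha>)) has_vector_derivative
      (Gcl \<gamma> (upd a \<alpha> 0) / (2 * (- a EC))) *\<^sub>R (0 + 1 *\<^sub>R dv \<alpha>) + (pSigma \<gamma> \<alpha> a / (2 * (- a EC))) *\<^sub>R (Dvec a + 0 *\<^sub>R dv \<alpha>)) (at 0)"
    by (rule vd_scale) (use K in \<open>auto intro!: derivative_eq_intros dG\<close>)
  then have "((\<lambda>s. (Gcl \<gamma> (upd a \<alpha> s) / (2 * (- a EC))) *\<^sub>R (Dvec a + s *\<^sub>R dv \<alpha>)) has_vector_derivative
      (pSigma \<gamma> \<alpha> a / (2 * (- a EC))) *\<^sub>R Dvec a + (Gcl \<gamma> a / (2 * (- a EC))) *\<^sub>R dv \<alpha>) (at 0)"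
    by (simp add: add.commute)
  then show ?thesis unfolding pPhi_def by (rule vderiv_ev[OF _ ev])
qed

lemma pPhi_EC: "pPhi \<gamma> EC a = (pSigma \<gamma> EC a / (2 * (- a EC)) + Gcl \<gamma> a / (2 * (- a EC)\<^sup>2)) *\<^sub>R Dvec a"
proof -
  have ev: "eventually (\<lambda>s. Phi_f \<gamma> (upd a EC s) = (Gcl \<gamma> (upd a EC s) / (2 * (- a EC - s))) *\<^sub>R Dvec a) (nhds 0)"
    using Phi_ev[OF g K b, of EC] by (simp add: Dvec_upd dv_EC)
  have dG: "((\<lambda>s. Gcl \<gamma> (upd a EC s)) has_real_derivative pSigma \<gamma> EC a) (at 0)"
    using G_EC[OF g K b] pSigma_EC by simp
  have "((\<lambda>s. Gcl \<gamma> (upd a EC s) / (2 * (- a EC - s))) has_real_derivative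
     (pSigma \<gamma> EC a / (2 * (- a EC)) + Gcl \<gamma> a / (2 * (- a EC)\<^sup>2))) (at 0)"
    apply (rule DERIV_cong)
     apply (rule DERIV_divide[OF dG])
      apply (auto intro!: derivative_eq_intros)[1]
    using K by (auto simp: field_simps power2_eq_square)
  from has_vector_derivative_scaleR[OF this has_vector_derivative_const[of "Dvec a"]]
  have "((\<lambda>s. (Gcl \<gamma> (upd a EC s) / (2 * (- a EC - s))) *\<^sub>R Dvec a) has_vector_derivative
     (pSigma \<gamma> EC a / (2 * (- a EC)) + Gcl \<gamma> a / (2 * (- a EC)\<^sup>2)) *\<^sub>R Dvec a) (at 0)" by simp
  then show ?thesis unfolding pPhi_def by (rule vderiv_ev[OF _ ev])
qed

end


context
  fixes \<gamma> :: "nat \<Rightarrow> real" and \<rho> \<Theta> b :: real and u :: "real^'n::finite"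
  assumes g: "\<forall>m\<ge>1. \<gamma> m > 0" and rp: "\<rho> > 0" and tp: "\<Theta> > 0" and b: "b \<in> interior (Sset \<gamma>)"
begin

abbreviation "a0 \<equiv> (Avar \<gamma> \<rho> u \<Theta> b :: 'n eidx \<Rightarrow> real)"

lemma a0_EC: "a0 EC = - 1 / (2 * \<Theta>)" by (simp add: Avar_def)
lemma a0_K: "a0 EC < 0" using tp by (simp add: a0_EC)
lemma a0_D: "Dvec a0 = (1 / \<Theta>) *\<^sub>R u" by (simp add: Avar_def Dvec_def vec_eq_iff)
lemma a0_bb: "bbv a0 = b"
  using tp by (simp add: bbv_def a0_D a0_EC) (simp add: Avar_def power2_eq_square field_simps)
lemma a0_b: "bbv a0 \<in> interior (Sset \<gamma>)" using b a0_bb by simp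
lemma S2pos: "Ser \<gamma> 2 b > 0" by (rule Ser_pos[OF g b])
lemma a0_PE: "(pi / (- a0 EC)) powr (real CARD('n) / 2) * exp (a0 EA) = \<rho> / Ser \<gamma> 2 b"
proof -
  have pk: "pi / (- a0 EC) = 2 * pi * \<Theta>" using tp by (simp add: a0_EC)
  have z: "Zfun CARD('n) \<gamma> b \<Theta> = (2 * pi * \<Theta>) powr (real CARD('n) / 2) * Ser \<gamma> 2 b"
    by (simp add: Zfun_def Wsum_Ser[OF g b])
  have zp: "Zfun CARD('n) \<gamma> b \<Theta> > 0" using z S2pos tp by simp
  have "exp (a0 EA) = \<rho> / Zfun CARD('n) \<gamma> b \<Theta>"
    using rp zp by (simp add: Avar_def)
  then show ?thesis unfolding pk z using tp S2pos by (simp add: field_simps)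
qed

lemma a0_G: "Gcl \<gamma> a0 = \<rho> * avg \<gamma> b (\<lambda>m. 1 / real m)"
  unfolding Gcl_def a0_PE a0_bb avg1_Ser[OF g b] by simp

lemma pS_EA: "pSigma \<gamma> EA a0 = \<rho> * avg \<gamma> b (\<lambda>m. 1 / real m)"
  using pSigma_EA[OF g a0_K a0_b] a0_G by simp
lemma pS_EB: "pSigma \<gamma> EB a0 = \<rho>"
  using pSigma_EB[OF g a0_K a0_b] a0_PE a0_bb S2pos by simp
lemma pS_ED: "pSigma \<gamma> (EDi i) a0 = \<rho> * u $ i"
  using pSigma_ED[OF g a0_K a0_b, of i] a0_PE a0_bb S2pos tp by (simp add: a0_D a0_EC)
lemma pS_EC: "pSigma \<gamma> EC a0 = \<rho> * (norm u)\<^sup>2 + real CARD('n) * \<rho> * \<Theta> * avg \<gamma> b (\<lambda>m. 1 / real m)"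
proof -
  have "pSigma \<gamma> EC a0 = (real CARD('n) / 2) * (2 * \<Theta>) * Gcl \<gamma> a0 + \<rho> * ((norm ((1 / \<Theta>) *\<^sub>R u))\<^sup>2 * \<Theta>\<^sup>2)"
    using pSigma_EC[OF g a0_K a0_b] a0_PE a0_bb S2pos tp by (simp add: a0_D a0_EC field_simps power2_eq_square)
  also have "(norm ((1 / \<Theta>) *\<^sub>R u))\<^sup>2 * \<Theta>\<^sup>2 = (norm u)\<^sup>2"
    using tp by (simp add: power_mult_distrib power_divide field_simps)
  finally show ?thesis unfolding a0_G by (simp add: field_simps)
qed

lemma pP_EA: "pPhi \<gamma> EA a0 = (\<rho> * avg \<gamma> b (\<lambda>m. 1 / real m)) *\<^sub>R u"
  using pPhi_A[OF g a0_K a0_b, of EA] pS_EA tp by (simp add: dv_EA a0_D a0_EC)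
lemma pP_EB: "pPhi \<gamma> EB a0 = \<rho> *\<^sub>R u"
  using pPhi_A[OF g a0_K a0_b, of EB] pS_EB tp by (simp add: dv_EB a0_D a0_EC)
lemma pP_ED: "pPhi \<gamma> (EDi i) a0 = (\<rho> * u $ i) *\<^sub>R u + (\<rho> * \<Theta> * avg \<gamma> b (\<lambda>m. 1 / real m)) *\<^sub>R axis i 1"
  using pPhi_A[OF g a0_K a0_b, of "EDi i"] pS_ED a0_G tp by (simp add: dv_EDi a0_D a0_EC)
lemma pP_EC: "pPhi \<gamma> EC a0 = (\<rho> * (norm u)\<^sup>2) *\<^sub>R u + ((real CARD('n) + 2) * \<rho> * \<Theta> * avg \<gamma> b (\<lambda>m. 1 / real m)) *\<^sub>R u"
proof -
  have "pPhi \<gamma> EC a0 = ((pSigma \<gamma> EC a0 * \<Theta> + Gcl \<gamma> a0 * (2 * \<Theta>\<^sup>2)) / \<Theta>) *\<^sub>R u"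
    using pPhi_EC[OF g a0_K a0_b] tp by (simp add: a0_D a0_EC field_simps power2_eq_square)
  also have "\<dots> = (\<rho> * (norm u)\<^sup>2 + (real CARD('n) + 2) * \<rho> * \<Theta> * avg \<gamma> b (\<lambda>m. 1 / real m)) *\<^sub>R u"
    by (rule arg_cong[where f="\<lambda>c. c *\<^sub>R u"]) (unfold pS_EC a0_G, use tp in \<open>simp add: field_simps power2_eq_square\<close>)
  finally show ?thesis by (simp add: scaleR_add_left)
qed

end


type_synonym 'n fld = "real \<Rightarrow> real^('n::finite) \<Rightarrow> real"

definition pt :: "real \<Rightarrow> real^('n::finite) \<Rightarrow> 'n option \<Rightarrow> real \<Rightarrow> real \<times> (real^'n)" where
  "pt t x k s = (case k of None \<Rightarrow> (t + s, x) | Some i \<Rightarrow> (t, x + s *\<^sub>R axis i 1))"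

definition lin :: "('n::finite) fld \<Rightarrow> real \<Rightarrow> real^'n \<Rightarrow> 'n option \<Rightarrow> real \<Rightarrow> real" where
  "lin f t x k s = case_prod f (pt t x k s)"

definition Dk :: "'n option \<Rightarrow> ('n::finite) fld \<Rightarrow> 'n fld" where
  "Dk k f t x = deriv (lin f t x k) 0"

definition C1 :: "(real \<times> (real^'n)) set \<Rightarrow> ('n::finite) fld \<Rightarrow> bool" where
  "C1 U f \<longleftrightarrow> (\<forall>t x k. (t, x) \<in> U \<longrightarrow> (lin f t x k has_real_derivative Dk k f t x) (at 0))"

definition C2 :: "(real \<times> (real^'n)) set \<Rightarrow> ('n::finite) fld \<Rightarrow> bool" where
  "C2 U f \<longleftrightarrow> C1 U f \<and> (\<forall>k. C1 U (Dk k f))"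

lemma pt_0 [simp]: "pt t x k 0 = (t, x)"
  by (cases k) (auto simp: pt_def)

lemma pdt_Dk: "pdt f t x = Dk None f t x"
proof -
  have "(\<lambda>D. ((\<lambda>s. f s x) has_field_derivative D) (at t)) = (\<lambda>D. (lin f t x None has_field_derivative D) (at 0))"
  proof
    fix D
    have "((\<lambda>s. f s x) has_field_derivative D) (at (0 + t)) = ((\<lambda>s. f (s + t) x) has_field_derivative D) (at 0)"
      by (rule DERIV_shift)
    moreover have "(\<lambda>s. f (s + t) x) = lin f t x None" by (auto simp: lin_def pt_def add.commute)
    ultimately show "((\<lambda>s. f s x) has_field_derivative D) (at t) = (lin f t x None has_field_derivative D) (at 0)"
      by simp
  qed
  then show ?thesis by (simp add: pdt_def Dk_def deriv_def)
qed

lemma lin_Some: "lin f t x (Some i) = (\<lambda>s. f t (x + s *\<^sub>R axis i 1))"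
  by (simp add: lin_def pt_def fun_eq_iff)

lemma pdx_Dk: "pdx i f t x = Dk (Some i) f t x"
  by (simp add: pdx_def Dk_def lin_Some)

lemma cont_pt: "isCont (pt t x k) s"
proof (cases k)
  case None
  have "pt t x k = (\<lambda>s. (t + s, x))" using None by (simp add: pt_def fun_eq_iff)
  then show ?thesis by (auto intro!: continuous_intros)
next
  case (Some i)
  have "pt t x k = (\<lambda>s. (t, x + s *\<^sub>R axis i 1))" using Some by (simp add: pt_def fun_eq_iff)
  then show ?thesis by (auto intro!: continuous_intros)
qed

lemma ev_U:
  assumes "open U" "(t, x) \<in> U"
  shows "eventually (\<lambda>s. pt t x k s \<in> U) (nhds 0)"
proof -
  have "isCont (pt t x k) 0" by (rule cont_pt)
  then have "eventually (\<lambda>s. pt t x k s \<in> U) (at 0)"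
    using assms by (intro topological_tendstoD) (auto simp: isCont_def)
  then show ?thesis using assms by (simp add: eventually_nhds_conv_at)
qed

lemma lin_ev:
  assumes "open U" "(t, x) \<in> U" "\<forall>(t, x)\<in>U. f t x = g t x"
  shows "eventually (\<lambda>s. lin f t x k s = lin g t x k s) (nhds 0)"
  using ev_U[OF assms(1,2), of k] by (rule eventually_mono) (use assms(3) in \<open>auto simp: lin_def\<close>)

lemma Dk_local:
  assumes "open U" "(t, x) \<in> U" "\<forall>(t, x)\<in>U. f t x = g t x"
  shows "Dk k f t x = Dk k g t x"
  unfolding Dk_def by (rule deriv_cong_ev[OF lin_ev[OF assms]]) simp

lemma C1_local:
  assumes "open U" "C1 U f" "\<forall>(t, x)\<in>U. f t x = g t x"
  shows "C1 U g"
  unfolding C1_def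
proof (intro allI impI)
  fix t x k assume tx: "(t, x) \<in> U"
  have "(lin f t x k has_real_derivative Dk k f t x) (at 0)" using assms(2) tx by (auto simp: C1_def)
  then show "(lin g t x k has_real_derivative Dk k g t x) (at 0)"
    using DERIV_cong_ev[OF refl lin_ev[OF assms(1) tx assms(3), of k] Dk_local[OF assms(1) tx assms(3)]] by simp
qed

lemma C1D: "C1 U f \<Longrightarrow> (t, x) \<in> U \<Longrightarrow> (lin f t x k has_real_derivative Dk k f t x) (at 0)"
  by (auto simp: C1_def)

lemma C1I:
  assumes "\<And>t x k. (t, x) \<in> U \<Longrightarrow> (lin f t x k has_real_derivative D t x k) (at 0)"
  shows "C1 U f" and "\<And>t x k. (t, x) \<in> U \<Longrightarrow> Dk k f t x = D t x k"
proof -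
  show "Dk k f t x = D t x k" if "(t, x) \<in> U" for t x k
    unfolding Dk_def using assms[OF that] by (rule DERIV_imp_deriv)
  then show "C1 U f" using assms by (auto simp: C1_def)
qed

lemma lin_const [simp]: "lin (\<lambda>t x. c) t x k = (\<lambda>s. c)" by (simp add: lin_def fun_eq_iff split: prod.splits)

lemma lin_comp: "lin (\<lambda>t x. h (f t x)) t x k = (\<lambda>s. h (lin f t x k s))"
  by (simp add: lin_def fun_eq_iff split: prod.splits)
lemma lin_bin: "lin (\<lambda>t x. h (f t x) (g t x)) t x k = (\<lambda>s. h (lin f t x k s) (lin g t x k s))"
  by (simp add: lin_def fun_eq_iff split: prod.splits)
lemma lin_at0 [simp]: "lin f t x k 0 = f t x" by (simp add: lin_def)

lemma C1_const: "C1 U (\<lambda>t x. c)" and Dk_const: "Dk k (\<lambda>t x. c) t x = 0"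
  by (auto simp: C1_def Dk_def)

lemma C1_add: assumes "C1 U f" "C1 U g"
  shows "C1 U (\<lambda>t x. f t x + g t x)"
    and "(t, x) \<in> U \<Longrightarrow> Dk k (\<lambda>t x. f t x + g t x) t x = Dk k f t x + Dk k g t x"
proof -
  have *: "(lin (\<lambda>t x. f t x + g t x) t x k has_real_derivative Dk k f t x + Dk k g t x) (at 0)" if "(t, x) \<in> U" for t x k
    unfolding lin_bin[where h="(+)"] using C1D[OF assms(1) that] C1D[OF assms(2) that] by (rule DERIV_add)
  show "C1 U (\<lambda>t x. f t x + g t x)" by (rule C1I(1)[OF *])
  show "(t, x) \<in> U \<Longrightarrow> Dk k (\<lambda>t x. f t x + g t x) t x = Dk k f t x + Dk k g t x" by (rule C1I(2)[OF *])
qed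

lemma C1_diff: assumes "C1 U f" "C1 U g"
  shows "C1 U (\<lambda>t x. f t x - g t x)"
    and "(t, x) \<in> U \<Longrightarrow> Dk k (\<lambda>t x. f t x - g t x) t x = Dk k f t x - Dk k g t x"
proof -
  have *: "(lin (\<lambda>t x. f t x - g t x) t x k has_real_derivative Dk k f t x - Dk k g t x) (at 0)" if "(t, x) \<in> U" for t x k
    unfolding lin_bin[where h="(-)"] using C1D[OF assms(1) that] C1D[OF assms(2) that] by (rule DERIV_diff)
  show "C1 U (\<lambda>t x. f t x - g t x)" by (rule C1I(1)[OF *])
  show "(t, x) \<in> U \<Longrightarrow> Dk k (\<lambda>t x. f t x - g t x) t x = Dk k f t x - Dk k g t x" by (rule C1I(2)[OF *])
qed

lemma C1_mult: assumes "C1 U f" "C1 U g"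
  shows "C1 U (\<lambda>t x. f t x * g t x)"
    and "(t, x) \<in> U \<Longrightarrow> Dk k (\<lambda>t x. f t x * g t x) t x = Dk k f t x * g t x + f t x * Dk k g t x"
proof -
  have *: "(lin (\<lambda>t x. f t x * g t x) t x k has_real_derivative Dk k f t x * g t x + f t x * Dk k g t x) (at 0)" if "(t, x) \<in> U" for t x k
    unfolding lin_bin[where h="(*)"] using DERIV_mult[OF C1D[OF assms(1) that] C1D[OF assms(2) that]] by (simp add: mult.commute)
  show "C1 U (\<lambda>t x. f t x * g t x)" by (rule C1I(1)[OF *])
  show "(t, x) \<in> U \<Longrightarrow> Dk k (\<lambda>t x. f t x * g t x) t x = Dk k f t x * g t x + f t x * Dk k g t x" by (rule C1I(2)[OF *])
qed

lemma C1_comp: assumes "C1 U f" "\<And>t x. (t, x) \<in> U \<Longrightarrow> (h has_real_derivative h' (f t x)) (at (f t x))"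
  shows "C1 U (\<lambda>t x. h (f t x))"
    and "(t, x) \<in> U \<Longrightarrow> Dk k (\<lambda>t x. h (f t x)) t x = h' (f t x) * Dk k f t x"
proof -
  have *: "(lin (\<lambda>t x. h (f t x)) t x k has_real_derivative h' (f t x) * Dk k f t x) (at 0)" if "(t, x) \<in> U" for t x k
    unfolding lin_comp using DERIV_chain2[OF _ C1D[OF assms(1) that]] assms(2)[OF that] by simp
  show "C1 U (\<lambda>t x. h (f t x))" by (rule C1I(1)[OF *])
  show "(t, x) \<in> U \<Longrightarrow> Dk k (\<lambda>t x. h (f t x)) t x = h' (f t x) * Dk k f t x" by (rule C1I(2)[OF *])
qed

lemma C1_sum: assumes "finite I" "\<And>i. i \<in> I \<Longrightarrow> C1 U (f i)"
  shows "C1 U (\<lambda>t x. \<Sum>i\<in>I. f i t x)"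
    and "(t, x) \<in> U \<Longrightarrow> Dk k (\<lambda>t x. \<Sum>i\<in>I. f i t x) t x = (\<Sum>i\<in>I. Dk k (f i) t x)"
proof -
  have *: "(lin (\<lambda>t x. \<Sum>i\<in>I. f i t x) t x k has_real_derivative (\<Sum>i\<in>I. Dk k (f i) t x)) (at 0)" if "(t, x) \<in> U" for t x k
  proof -
    have e: "lin (\<lambda>t x. \<Sum>i\<in>I. f i t x) t x k = (\<lambda>s. \<Sum>i\<in>I. lin (f i) t x k s)"
      by (simp add: lin_def fun_eq_iff split: prod.splits)
    show ?thesis unfolding e by (rule DERIV_sum) (use C1D[OF assms(2) that] in auto)
  qed
  show "C1 U (\<lambda>t x. \<Sum>i\<in>I. f i t x)" by (rule C1I(1)[OF *])
  show "(t, x) \<in> U \<Longrightarrow> Dk k (\<lambda>t x. \<Sum>i\<in>I. f i t x) t x = (\<Sum>i\<in>I. Dk k (f i) t x)" by (rule C1I(2)[OF *])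
qed

lemma C2_C1: "C2 U f \<Longrightarrow> C1 U f" and C2_Dk: "C2 U f \<Longrightarrow> C1 U (Dk k f)"
  by (auto simp: C2_def)

lemma C2_const: "C2 U (\<lambda>t x. c)"
proof -
  have *: "Dk k (\<lambda>t x. c) = (\<lambda>t x. 0)" for k by (auto simp: Dk_def fun_eq_iff)
  show ?thesis by (simp only: C2_def *) (simp add: C1_const)
qed

lemma C2_add: assumes "open U" "C2 U f" "C2 U g" shows "C2 U (\<lambda>t x. f t x + g t x)"
  unfolding C2_def
proof (intro conjI allI)
  show "C1 U (\<lambda>t x. f t x + g t x)" by (rule C1_add(1)[OF C2_C1[OF assms(2)] C2_C1[OF assms(3)]])
  fix k
  show "C1 U (Dk k (\<lambda>t x. f t x + g t x))"
    by (rule C1_local[OF assms(1) C1_add(1)[OF C2_Dk[OF assms(2)] C2_Dk[OF assms(3)]]])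
       (use C1_add(2)[OF C2_C1[OF assms(2)] C2_C1[OF assms(3)]] in auto)
qed

lemma C2_diff: assumes "open U" "C2 U f" "C2 U g" shows "C2 U (\<lambda>t x. f t x - g t x)"
  unfolding C2_def
proof (intro conjI allI)
  show "C1 U (\<lambda>t x. f t x - g t x)" by (rule C1_diff(1)[OF C2_C1[OF assms(2)] C2_C1[OF assms(3)]])
  fix k
  show "C1 U (Dk k (\<lambda>t x. f t x - g t x))"
    by (rule C1_local[OF assms(1) C1_diff(1)[OF C2_Dk[OF assms(2)] C2_Dk[OF assms(3)]]])
       (use C1_diff(2)[OF C2_C1[OF assms(2)] C2_C1[OF assms(3)]] in auto)
qed

lemma C2_mult: assumes "open U" "C2 U f" "C2 U g" shows "C2 U (\<lambda>t x. f t x * g t x)"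
  unfolding C2_def
proof (intro conjI allI)
  note f1 = C2_C1[OF assms(2)] and g1 = C2_C1[OF assms(3)]
  show "C1 U (\<lambda>t x. f t x * g t x)" by (rule C1_mult(1)[OF f1 g1])
  fix k
  show "C1 U (Dk k (\<lambda>t x. f t x * g t x))"
    by (rule C1_local[OF assms(1) C1_add(1)[OF C1_mult(1)[OF C2_Dk[OF assms(2)] g1] C1_mult(1)[OF f1 C2_Dk[OF assms(3)]]]])
       (use C1_mult(2)[OF f1 g1] in auto)
qed

lemma C2_comp:
  assumes "open U" "C2 U f"
    and h: "\<And>t x. (t, x) \<in> U \<Longrightarrow> (h has_real_derivative h' (f t x)) (at (f t x))"
    and h': "\<And>t x. (t, x) \<in> U \<Longrightarrow> (h' has_real_derivative h'' (f t x)) (at (f t x))"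
  shows "C2 U (\<lambda>t x. h (f t x))"
  unfolding C2_def
proof (intro conjI allI)
  note f1 = C2_C1[OF assms(2)]
  show "C1 U (\<lambda>t x. h (f t x))" by (rule C1_comp(1)[OF f1 h])
  fix k
  show "C1 U (Dk k (\<lambda>t x. h (f t x)))"
    by (rule C1_local[OF assms(1) C1_mult(1)[OF C1_comp(1)[OF f1 h'] C2_Dk[OF assms(2)]]])
       (use C1_comp(2)[OF f1 h] in auto)
qed

lemma C2_sum: assumes "open U" "finite I" "\<And>i. i \<in> I \<Longrightarrow> C2 U (f i)"
  shows "C2 U (\<lambda>t x. \<Sum>i\<in>I. f i t x)"
  unfolding C2_def
proof (intro conjI allI)
  have f1: "\<And>i. i \<in> I \<Longrightarrow> C1 U (f i)" using assms(3) C2_C1 by blast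
  show "C1 U (\<lambda>t x. \<Sum>i\<in>I. f i t x)" by (rule C1_sum(1)[OF assms(2) f1])
  fix k
  have f2: "\<And>i. i \<in> I \<Longrightarrow> C1 U (Dk k (f i))" using assms(3) C2_Dk by blast
  show "C1 U (Dk k (\<lambda>t x. \<Sum>i\<in>I. f i t x))"
    by (rule C1_local[OF assms(1) C1_sum(1)[OF assms(2) f2]])
       (use C1_sum(2)[OF assms(2) f1] in auto)
qed


definition dirv :: "('n::finite) option \<Rightarrow> real \<times> (real^'n)" where
  "dirv k = (case k of None \<Rightarrow> (1, 0) | Some i \<Rightarrow> (0, axis i 1))"

lemma dirv_Basis: "dirv k \<in> Basis"
  by (cases k) (auto simp: dirv_def Basis_prod_def Basis_vec_def)

lemma pt_dirv: "pt t x k s = (t, x) + s *\<^sub>R dirv k"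
  by (cases k) (auto simp: pt_def dirv_def)

lemma lin_phi: "lin f t x k = (\<lambda>s. (\<lambda>(t, x). f t x) ((t, x) + s *\<^sub>R dirv k))"
  by (simp add: lin_def pt_dirv fun_eq_iff)

lemma dirD_Dk: "dirD (dirv k) (\<lambda>(t, x). f t x) = (\<lambda>(t, x). Dk k f t x)"
  by (simp add: fun_eq_iff dirD_def Dk_def lin_phi)

lemma smooth_C2:
  assumes sm: "smooth_on U (\<lambda>(t, x). f t x)"
  shows "C2 U f"
proof -
  have d0: "(\<lambda>s. (\<lambda>(t, x). f t x) (p + s *\<^sub>R v)) differentiable (at 0)" if "v \<in> Basis" "p \<in> U" for v p
    using spec[OF sm[unfolded smooth_on_def], where x="[]"] that by simp
  have d1: "(\<lambda>s. dirD w (\<lambda>(t, x). f t x) (p + s *\<^sub>R v)) differentiable (at 0)" if "w \<in> Basis" "v \<in> Basis" "p \<in> U" for w v p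
  proof -
    show ?thesis using spec[OF sm[unfolded smooth_on_def], where x="[w]"] that by simp
  qed
  have c1: "C1 U f"
    unfolding C1_def Dk_def
  proof (intro allI impI)
    fix t x k assume "(t, x) \<in> U"
    then have "lin f t x k differentiable (at 0)" unfolding lin_phi by (intro d0 dirv_Basis)
    then show "(lin f t x k has_real_derivative deriv (lin f t x k) 0) (at 0)"
      by (simp add: DERIV_deriv_iff_real_differentiable)
  qed
  have c2: "C1 U (Dk k f)" for k
    unfolding C1_def
  proof (intro allI impI)
    fix t x k' assume "(t, x) \<in> U"
    then have "(\<lambda>s. dirD (dirv k) (\<lambda>(t, x). f t x) ((t, x) + s *\<^sub>R dirv k')) differentiable (at 0)"
      by (intro d1 dirv_Basis)
    then have "lin (Dk k f) t x k' differentiable (at 0)"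
      unfolding dirD_Dk lin_phi by simp
    then show "(lin (Dk k f) t x k' has_real_derivative Dk k' (Dk k f) t x) (at 0)"
      by (simp add: Dk_def DERIV_deriv_iff_real_differentiable)
  qed
  show ?thesis using c1 c2 by (simp add: C2_def)
qed


lemma sum_eidx: "(\<Sum>b\<in>(UNIV::('n::finite) eidx set). F b) = (\<Sum>j\<in>UNIV. F (EDi j)) + F EA + F EB + F EC"
proof -
  have "(\<Sum>b\<in>(UNIV::'n eidx set). F b) = (\<Sum>b\<in>range EDi \<union> {EA, EB, EC}. F b)"
    by (simp only: UNIV_eidx)
  also have "\<dots> = (\<Sum>b\<in>range EDi. F b) + (\<Sum>b\<in>{EA, EB, EC}. F b)"
    by (rule sum.union_disjoint) auto
  also have "(\<Sum>b\<in>range EDi. F b) = (\<Sum>j\<in>UNIV. F (EDi j))"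
    by (rule sum.reindex_cong[where l=EDi]) (auto simp: inj_def)
  finally show ?thesis by (simp add: add.assoc)
qed

lemma mv_outer: "outer a b *v w = (b \<bullet> w) *\<^sub>R a"
  by (simp add: vec_eq_iff outer_def matrix_vector_mult_def inner_vec_def sum_distrib_left mult_ac)
lemma transpose_outer: "transpose (outer a b) = outer b a"
  by (simp add: vec_eq_iff outer_def transpose_def)
lemma mv_add: "(M + N) *v w = M *v w + N *v (w::real^'n::finite)"
  by (simp add: vec_eq_iff matrix_vector_mult_def sum.distrib algebra_simps)
lemma mv_diff: "(M - N) *v w = M *v w - N *v (w::real^'n::finite)"
  by (simp add: vec_eq_iff matrix_vector_mult_def sum_subtractf algebra_simps)
lemma mv_scale: "(c *\<^sub>R M) *v w = c *\<^sub>R (M *v (w::real^'n::finite))"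
  by (simp add: vec_eq_iff matrix_vector_mult_def sum_distrib_left mult_ac)
lemma mv_zero: "(0::real^'n^'m) *v w = 0"
  by (simp add: vec_eq_iff matrix_vector_mult_def)
lemma transpose_scale: "transpose (c *\<^sub>R M) = c *\<^sub>R transpose (M::real^'n^'n)"
  by (simp add: vec_eq_iff transpose_def)
lemma transpose_add': "transpose (M + N) = transpose M + transpose (N::real^'n^'n)"
  by (simp add: vec_eq_iff transpose_def)
lemma transpose_diff': "transpose (M - N) = transpose M - transpose (N::real^'n^'n)"
  by (simp add: vec_eq_iff transpose_def)
lemma inner_axis1: "axis i 1 \<bullet> w = w $ i"
  by (simp add: inner_axis' )

lemmas mvsimps = mv_outer transpose_outer mv_add mv_diff mv_scale mv_zero matrix_vector_mul_lid
  transpose_scale transpose_add' transpose_diff' inner_axis1 transpose_mat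


lemma row_EA:
  fixes g :: "('n::finite) eidx \<Rightarrow> real^'n"
  assumes hAC: "g EA + ((real CARD('n) + 2) * th) *\<^sub>R g EC = gchi"
  shows "(\<Sum>b\<in>UNIV. Xblk \<epsilon> \<mu> \<nu> \<kappa> th uu EA b *v g b) = \<epsilon> *\<^sub>R (\<nu> *\<^sub>R gchi)"
proof -
  have "(\<Sum>b\<in>UNIV. Xblk \<epsilon> \<mu> \<nu> \<kappa> th uu EA b *v g b) = (\<epsilon> * \<nu>) *\<^sub>R g EA + ((real CARD('n) + 2) * \<epsilon> * \<nu> * th) *\<^sub>R g EC"
    by (simp add: sum_eidx Xblk_def mvsimps)
  also have "\<dots> = \<epsilon> *\<^sub>R (\<nu> *\<^sub>R (g EA + ((real CARD('n) + 2) * th) *\<^sub>R g EC))"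
    by (simp add: scaleR_add_right mult_ac)
  finally show ?thesis using hAC by simp
qed

definition sig :: "real^'n^'n \<Rightarrow> real^'n^'n" where
  "sig Du = Du + transpose Du - ((2 / real CARD('n)) * (\<Sum>j\<in>UNIV. Du $ j $ j)) *\<^sub>R mat 1"

lemma sig_nth: "sig (Du::real^('n::finite)^'n) $ i $ k = Du $ i $ k + Du $ k $ i - (if i = k then (2 / real CARD('n)) * (\<Sum>j\<in>UNIV. Du $ j $ j) else 0)"
  by (simp add: sig_def transpose_def mat_def)

lemma if_mv: "(if c then M else 0) *v w = (if c then M *v w else 0)"
  by (simp add: mv_zero)

lemma axis1_nth: "axis x (1::real) $ k = (if k = x then 1 else 0)"
  by (simp add: axis_def)

lemma inner_axis1': "w \<bullet> axis i 1 = (w::real^'n::finite) $ i"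
  by (simp add: inner_axis)

lemma sum_axis_vec: "(\<Sum>j\<in>UNIV. (c j) *\<^sub>R axis j (1::real)) = (\<chi> k. c k)"
  by (simp add: vec_eq_iff axis1_nth if_distrib[where f="\<lambda>x. _ * x"] cong: if_cong)

lemma L1:
  fixes w :: "('n::finite) \<Rightarrow> real^'n"
  shows "(\<Sum>j\<in>UNIV. Xblk \<epsilon> \<mu> \<nu> \<kappa> th uu (EDi i) (EDi j) *v w j)
     = (\<epsilon> * \<mu> * th) *\<^sub>R (w i + (\<chi> k. w k $ i) - ((2 / real CARD('n)) * (\<Sum>j\<in>UNIV. w j $ j)) *\<^sub>R axis i 1)"
proof -
  have "(\<Sum>j\<in>UNIV. Xblk \<epsilon> \<mu> \<nu> \<kappa> th uu (EDi i) (EDi j) *v w j)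
      = (\<Sum>j\<in>UNIV. (\<epsilon> * \<mu> * th) *\<^sub>R ((if i = j then w j else 0) + (w j $ i) *\<^sub>R axis j 1 - ((2 / real CARD('n)) * w j $ j) *\<^sub>R axis i 1))"
    by (simp add: Xblk_def mvsimps if_mv cong: if_cong)
  also have "\<dots> = (\<epsilon> * \<mu> * th) *\<^sub>R ((\<Sum>j\<in>UNIV. (if i = j then w j else 0)) + (\<Sum>j\<in>UNIV. (w j $ i) *\<^sub>R axis j 1) - (\<Sum>j\<in>UNIV. ((2 / real CARD('n)) * w j $ j) *\<^sub>R axis i 1))"
    by (simp add: scaleR_sum_right[symmetric] sum.distrib sum_subtractf)
  also have "\<dots> = (\<epsilon> * \<mu> * th) *\<^sub>R (w i + (\<chi> k. w k $ i) - ((2 / real CARD('n)) * (\<Sum>j\<in>UNIV. w j $ j)) *\<^sub>R axis i 1)"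
    by (simp add: sum_axis_vec scaleR_sum_left[symmetric] sum_distrib_left)
  finally show ?thesis .
qed

lemma row_ED:
  fixes g :: "('n::finite) eidx \<Rightarrow> real^'n"
  assumes th: "th > 0"
    and hD: "\<And>j k. g (EDi j) $ k = Du $ j $ k / th - uu $ j * gth $ k / th\<^sup>2"
    and hC: "g EC = (1 / (2 * th\<^sup>2)) *\<^sub>R gth"
  shows "(\<Sum>b\<in>UNIV. Xblk \<epsilon> \<mu> \<nu> \<kappa> th uu (EDi i) b *v g b) = \<epsilon> *\<^sub>R (\<chi> k. \<mu> * sig Du $ i $ k)"
proof -
  have s1: "(\<Sum>j\<in>UNIV. g (EDi j) $ j) = (\<Sum>j\<in>UNIV. Du $ j $ j) / th - (uu \<bullet> gth) / th\<^sup>2"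
    by (simp add: hD sum_subtractf sum_divide_distrib inner_vec_def)
  have s2: "uu \<bullet> g EC = (uu \<bullet> gth) / (2 * th\<^sup>2)"
    by (simp add: hC)
  have "(\<Sum>b\<in>UNIV. Xblk \<epsilon> \<mu> \<nu> \<kappa> th uu (EDi i) b *v g b)
     = (\<Sum>j\<in>UNIV. Xblk \<epsilon> \<mu> \<nu> \<kappa> th uu (EDi i) (EDi j) *v g (EDi j)) + XDC \<epsilon> \<mu> th uu i *v g EC"
    by (simp add: sum_eidx Xblk_def mv_zero)
  also have "\<dots> = (\<epsilon> * \<mu> * th) *\<^sub>R (g (EDi i) + (\<chi> k. g (EDi k) $ i) - ((2 / real CARD('n)) * (\<Sum>j\<in>UNIV. g (EDi j) $ j)) *\<^sub>R axis i 1)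
       + (2 * \<epsilon> * \<mu> * th) *\<^sub>R ((uu $ i) *\<^sub>R g EC + (g EC $ i) *\<^sub>R uu - (2 / real CARD('n) * (uu \<bullet> g EC)) *\<^sub>R axis i 1)"
    unfolding L1 by (simp add: XDC_def mvsimps inner_axis1' )
  also have "\<dots> = \<epsilon> *\<^sub>R (\<chi> k. \<mu> * sig Du $ i $ k)"
    unfolding s1 s2
  proof (subst vec_eq_iff, rule allI)
    fix k
    show "((\<epsilon> * \<mu> * th) *\<^sub>R (g (EDi i) + (\<chi> k. g (EDi k) $ i) - ((2 / real CARD('n)) * ((\<Sum>j\<in>UNIV. Du $ j $ j) / th - (uu \<bullet> gth) / th\<^sup>2)) *\<^sub>R axis i 1)
       + (2 * \<epsilon> * \<mu> * th) *\<^sub>R ((uu $ i) *\<^sub>R g EC + (g EC $ i) *\<^sub>R uu - (2 / real CARD('n) * ((uu \<bullet> gth) / (2 * th\<^sup>2))) *\<^sub>R axis i 1)) $ k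
       = (\<epsilon> *\<^sub>R (\<chi> k. \<mu> * sig Du $ i $ k)) $ k"
      using th by (simp add: hD hC sig_nth axis1_nth field_simps power2_eq_square)
  qed
  finally show ?thesis .
qed

lemma L2:
  fixes w :: "('n::finite) \<Rightarrow> real^'n"
  shows "(\<Sum>j\<in>UNIV. Xblk \<epsilon> \<mu> \<nu> \<kappa> th uu EC (EDi j) *v w j)
     = (2 * \<epsilon> * \<mu> * th) *\<^sub>R ((\<Sum>j\<in>UNIV. (uu $ j) *\<^sub>R w j) + (\<chi> k. uu \<bullet> w k) - ((2 / real CARD('n)) * (\<Sum>j\<in>UNIV. w j $ j)) *\<^sub>R uu)"
proof -
  have "(\<Sum>j\<in>UNIV. Xblk \<epsilon> \<mu> \<nu> \<kappa> th uu EC (EDi j) *v w j)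
      = (\<Sum>j\<in>UNIV. (2 * \<epsilon> * \<mu> * th) *\<^sub>R ((uu $ j) *\<^sub>R w j + (uu \<bullet> w j) *\<^sub>R axis j 1 - ((2 / real CARD('n)) * w j $ j) *\<^sub>R uu))"
    by (simp add: Xblk_def XDC_def mvsimps inner_axis1')
  also have "\<dots> = (2 * \<epsilon> * \<mu> * th) *\<^sub>R ((\<Sum>j\<in>UNIV. (uu $ j) *\<^sub>R w j) + (\<Sum>j\<in>UNIV. (uu \<bullet> w j) *\<^sub>R axis j 1) - (\<Sum>j\<in>UNIV. ((2 / real CARD('n)) * w j $ j) *\<^sub>R uu))"
    by (simp add: scaleR_sum_right[symmetric] sum.distrib sum_subtractf)
  also have "\<dots> = (2 * \<epsilon> * \<mu> * th) *\<^sub>R ((\<Sum>j\<in>UNIV. (uu $ j) *\<^sub>R w j) + (\<chi> k. uu \<bullet> w k) - ((2 / real CARD('n)) * (\<Sum>j\<in>UNIV. w j $ j)) *\<^sub>R uu)"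
    by (simp add: sum_axis_vec scaleR_sum_left[symmetric] sum_distrib_left)
  finally show ?thesis .
qed

lemma row_EC:
  fixes g :: "('n::finite) eidx \<Rightarrow> real^'n"
  assumes th: "th > 0"
    and hD: "\<And>j k. g (EDi j) $ k = Du $ j $ k / th - uu $ j * gth $ k / th\<^sup>2"
    and hC: "g EC = (1 / (2 * th\<^sup>2)) *\<^sub>R gth"
    and hAC: "g EA + ((real CARD('n) + 2) * th) *\<^sub>R g EC = gchi"
  shows "(\<Sum>b\<in>UNIV. Xblk \<epsilon> \<mu> \<nu> \<kappa> th uu EC b *v g b)
     = \<epsilon> *\<^sub>R (((real CARD('n) + 2) * \<nu> * th) *\<^sub>R gchi + (2 * \<kappa>) *\<^sub>R gth + (2 * \<mu>) *\<^sub>R (sig Du *v uu))"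
proof -
  let ?n = "real CARD('n)"
  have n0: "?n > 0" by simp
  have s1: "(\<Sum>j\<in>UNIV. g (EDi j) $ j) = (\<Sum>j\<in>UNIV. Du $ j $ j) / th - (uu \<bullet> gth) / th\<^sup>2"
    by (simp add: hD sum_subtractf sum_divide_distrib inner_vec_def)
  have s2: "uu \<bullet> g EC = (uu \<bullet> gth) / (2 * th\<^sup>2)"
    by (simp add: hC)
  have gA: "g EA $ k = gchi $ k - ((?n + 2) * th) * g EC $ k" for k
    using hAC by (auto simp: vec_eq_iff algebra_simps)
  have nn: "(norm uu)\<^sup>2 = uu \<bullet> uu" by (simp add: power2_norm_eq_inner)
  have nn': "norm uu * norm uu = uu \<bullet> uu" by (metis power2_eq_square power2_norm_eq_inner)
  have e1: "(\<Sum>j\<in>UNIV. uu $ j * g (EDi j) $ k) = (\<Sum>j\<in>UNIV. uu $ j * Du $ j $ k) / th - (uu \<bullet> uu) * gth $ k / th\<^sup>2" for k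
    by (simp add: hD right_diff_distrib sum_subtractf sum_divide_distrib[symmetric] sum_distrib_right[symmetric] inner_vec_def)
      (simp add: sum_divide_distrib sum_distrib_left mult_ac)
  have e2: "uu \<bullet> g (EDi k) = (\<Sum>j\<in>UNIV. uu $ j * Du $ k $ j) / th - uu $ k * (uu \<bullet> gth) / th\<^sup>2" for k
    by (simp add: inner_vec_def hD right_diff_distrib sum_subtractf sum_divide_distrib sum_distrib_left mult_ac)
  have e3: "(sig Du *v uu) $ k = (\<Sum>j\<in>UNIV. uu $ j * Du $ k $ j) + (\<Sum>j\<in>UNIV. uu $ j * Du $ j $ k) - (2 / ?n) * (\<Sum>j\<in>UNIV. Du $ j $ j) * uu $ k" for k
  proof -
    have "(sig Du *v uu) $ k = (\<Sum>j\<in>UNIV. Du $ k $ j * uu $ j + Du $ j $ k * uu $ j - (if k = j then (2 / ?n) * (\<Sum>j\<in>UNIV. Du $ j $ j) * uu $ j else 0))"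
      by (simp add: matrix_vector_mult_def sig_nth left_diff_distrib distrib_right if_distrib[where f="\<lambda>x. x * _"] cong: if_cong)
    also have "\<dots> = (\<Sum>j\<in>UNIV. uu $ j * Du $ k $ j) + (\<Sum>j\<in>UNIV. uu $ j * Du $ j $ k) - (2 / ?n) * (\<Sum>j\<in>UNIV. Du $ j $ j) * uu $ k"
      by (simp add: sum_subtractf sum.distrib mult_ac)
    finally show ?thesis .
  qed
  have "(\<Sum>b\<in>UNIV. Xblk \<epsilon> \<mu> \<nu> \<kappa> th uu EC b *v g b)
     = (\<Sum>j\<in>UNIV. Xblk \<epsilon> \<mu> \<nu> \<kappa> th uu EC (EDi j) *v g (EDi j)) + ((?n + 2) * \<epsilon> * \<nu> * th) *\<^sub>R g EA
       + (\<epsilon> * th) *\<^sub>R (((?n + 2)\<^sup>2 * \<nu> * th + 4 * \<kappa> * th + 4 * \<mu> * (norm uu)\<^sup>2) *\<^sub>R g EC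
           + (4 * (?n - 2) / ?n * \<mu> * (uu \<bullet> g EC)) *\<^sub>R uu)"
    by (simp add: sum_eidx Xblk_def mvsimps scaleR_add_right)
  also have "\<dots> = \<epsilon> *\<^sub>R (((real CARD('n) + 2) * \<nu> * th) *\<^sub>R gchi + (2 * \<kappa>) *\<^sub>R gth + (2 * \<mu>) *\<^sub>R (sig Du *v uu))"
    unfolding L2 s1 s2
  proof (subst vec_eq_iff, rule allI)
    fix k
    have "(\<Sum>j\<in>UNIV. uu $ j *\<^sub>R g (EDi j)) $ k = (\<Sum>j\<in>UNIV. uu $ j * g (EDi j) $ k)" by simp
    then show "((2 * \<epsilon> * \<mu> * th) *\<^sub>R ((\<Sum>j\<in>UNIV. uu $ j *\<^sub>R g (EDi j)) + (\<chi> k. uu \<bullet> g (EDi k)) - ((2 / ?n) * ((\<Sum>j\<in>UNIV. Du $ j $ j) / th - uu \<bullet> gth / th\<^sup>2)) *\<^sub>R uu)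
       + ((?n + 2) * \<epsilon> * \<nu> * th) *\<^sub>R g EA
       + (\<epsilon> * th) *\<^sub>R (((?n + 2)\<^sup>2 * \<nu> * th + 4 * \<kappa> * th + 4 * \<mu> * (norm uu)\<^sup>2) *\<^sub>R g EC
           + (4 * (?n - 2) / ?n * \<mu> * (uu \<bullet> gth / (2 * th\<^sup>2))) *\<^sub>R uu)) $ k
       = (\<epsilon> *\<^sub>R (((?n + 2) * \<nu> * th) *\<^sub>R gchi + (2 * \<kappa>) *\<^sub>R gth + (2 * \<mu>) *\<^sub>R (sig Du *v uu))) $ k"
      using th n0 by (simp add: e1 e2 e3 gA hC nn nn' field_simps power2_eq_square)
  qed
  finally show ?thesis .
qed

lemma transpose_zero': "transpose (0::real^'n^'n) = 0"
  by (simp add: vec_eq_iff transpose_def)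

lemma Xblk_sym: "Xblk \<epsilon> \<mu> \<nu> \<kappa> th (uu::real^'n::finite) \<alpha> \<beta> = transpose (Xblk \<epsilon> \<mu> \<nu> \<kappa> th uu \<beta> \<alpha>)"
  by (cases \<alpha>; cases \<beta>)
     (auto simp: Xblk_def transpose_scale transpose_add' transpose_diff' transpose_outer transpose_mat
        transpose_zero' transpose_transpose)


locale setting =
  fixes \<gamma> :: "nat \<Rightarrow> real" and U :: "(real \<times> (real^'n::finite)) set"
    and \<rho> \<Theta> \<beta> :: "real \<Rightarrow> real^'n \<Rightarrow> real"
    and u :: "real \<Rightarrow> real^'n \<Rightarrow> real^'n"
  assumes g: "\<forall>m\<ge>1. \<gamma> m > 0"
    and Uo: "open U"
    and sr: "smooth_on U (\<lambda>(t, x). \<rho> t x)" and sT: "smooth_on U (\<lambda>(t, x). \<Theta> t x)"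
    and sb: "smooth_on U (\<lambda>(t, x). \<beta> t x)" and su: "\<forall>i. smooth_on U (\<lambda>(t, x). u t x $ i)"
    and pos: "\<forall>(t, x)\<in>U. \<rho> t x > 0 \<and> \<Theta> t x > 0 \<and> \<beta> t x \<in> interior (Sset \<gamma>)"
begin

lemma rp: "(t, x) \<in> U \<Longrightarrow> \<rho> t x > 0" using pos by auto
lemma tp: "(t, x) \<in> U \<Longrightarrow> \<Theta> t x > 0" using pos by auto
lemma bi: "(t, x) \<in> U \<Longrightarrow> \<beta> t x \<in> interior (Sset \<gamma>)" using pos by auto

lemma Cr: "C2 U \<rho>" using smooth_C2[OF sr] .
lemma CT: "C2 U \<Theta>" using smooth_C2[OF sT] .
lemma Cb: "C2 U \<beta>" using smooth_C2[OF sb] .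
lemma Cu: "C2 U (\<lambda>t x. u t x $ i)" using smooth_C2 su by blast

lemma C2_local:
  assumes "C2 U f" "\<forall>(t, x)\<in>U. f t x = h t x" shows "C2 U h"
  unfolding C2_def
proof (intro conjI allI)
  show "C1 U h" by (rule C1_local[OF Uo C2_C1[OF assms(1)] assms(2)])
  fix k
  show "C1 U (Dk k h)"
    by (rule C1_local[OF Uo C2_Dk[OF assms(1)]]) (use Dk_local[OF Uo _ assms(2)] in auto)
qed

lemma CS: "C2 U (\<lambda>t x. Ser \<gamma> j (\<beta> t x))"
  by (rule C2_comp[OF Uo Cb, where h' = "Ser \<gamma> (Suc j)" and h'' = "Ser \<gamma> (Suc (Suc j))"])
     (auto intro!: Ser_deriv[OF g] bi)

lemma DS: "(t, x) \<in> U \<Longrightarrow> Dk k (\<lambda>t x. Ser \<gamma> j (\<beta> t x)) t x = Ser \<gamma> (Suc j) (\<beta> t x) * Dk k \<beta> t x"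
  by (rule C1_comp(2)[OF C2_C1[OF Cb]]) (auto intro!: Ser_deriv[OF g] bi)

lemma Spos: "(t, x) \<in> U \<Longrightarrow> Ser \<gamma> j (\<beta> t x) > 0"
  by (rule Ser_pos[OF g bi])

lemma d_ln: "y > 0 \<Longrightarrow> (ln has_real_derivative 1 / y) (at y)"
  by (auto intro!: derivative_eq_intros)
lemma d_inv1: "y > 0 \<Longrightarrow> ((\<lambda>y. 1 / y) has_real_derivative - (1 / y\<^sup>2)) (at y)"
  by (auto intro!: derivative_eq_intros simp: power2_eq_square field_simps)
lemma d_inv2: "y > 0 \<Longrightarrow> ((\<lambda>y. - (1 / y\<^sup>2)) has_real_derivative 2 / y ^ 3) (at y)"
  by (auto intro!: derivative_eq_intros simp: power2_eq_square field_simps power3_eq_cube)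

lemma C_ln: assumes "C2 U f" "\<And>t x. (t, x) \<in> U \<Longrightarrow> f t x > 0"
  shows "C2 U (\<lambda>t x. ln (f t x))"
    and "(t, x) \<in> U \<Longrightarrow> Dk k (\<lambda>t x. ln (f t x)) t x = Dk k f t x / f t x"
proof -
  show "C2 U (\<lambda>t x. ln (f t x))"
    by (rule C2_comp[OF Uo assms(1), where h'="\<lambda>y. 1 / y" and h''="\<lambda>y. - (1 / y\<^sup>2)"])
       (auto intro: d_ln d_inv1 assms(2))
  show "(t, x) \<in> U \<Longrightarrow> Dk k (\<lambda>t x. ln (f t x)) t x = Dk k f t x / f t x"
    using C1_comp(2)[OF C2_C1[OF assms(1)], where h=ln and h'="\<lambda>y. 1 / y"] d_ln assms(2)
    by auto
qed

lemma C_inv: assumes "C2 U f" "\<And>t x. (t, x) \<in> U \<Longrightarrow> f t x > 0"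
  shows "C2 U (\<lambda>t x. 1 / f t x)"
    and "(t, x) \<in> U \<Longrightarrow> Dk k (\<lambda>t x. 1 / f t x) t x = - Dk k f t x / (f t x)\<^sup>2"
proof -
  show "C2 U (\<lambda>t x. 1 / f t x)"
    by (rule C2_comp[OF Uo assms(1), where h'="\<lambda>y. - (1 / y\<^sup>2)" and h''="\<lambda>y. 2 / y ^ 3"])
       (auto intro: d_inv1 d_inv2 assms(2))
  show "(t, x) \<in> U \<Longrightarrow> Dk k (\<lambda>t x. 1 / f t x) t x = - Dk k f t x / (f t x)\<^sup>2"
    using C1_comp(2)[OF C2_C1[OF assms(1)], where h="\<lambda>y. 1 / y" and h'="\<lambda>y. - (1 / y\<^sup>2)"] d_inv1 assms(2)
    by auto
qed

end


context setting begin

lemmas C1r = C2_C1[OF Cr] and C1T = C2_C1[OF CT] and C1b = C2_C1[OF Cb]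
lemma C1u: "C1 U (\<lambda>t x. u t x $ i)" using C2_C1[OF Cu] .

lemma D_AD: "(t, x) \<in> U \<Longrightarrow> Dk k (\<lambda>t x. u t x $ j / \<Theta> t x) t x
    = Dk k (\<lambda>t x. u t x $ j) t x / \<Theta> t x - u t x $ j * Dk k \<Theta> t x / (\<Theta> t x)\<^sup>2"
proof -
  assume tx: "(t, x) \<in> U"
  have "Dk k (\<lambda>t x. u t x $ j * (1 / \<Theta> t x)) t x = Dk k (\<lambda>t x. u t x $ j) t x * (1 / \<Theta> t x) + u t x $ j * Dk k (\<lambda>t x. 1 / \<Theta> t x) t x"
    by (rule C1_mult(2)[OF C1u C2_C1[OF C_inv(1)[OF CT tp]] tx])
  then show ?thesis using C_inv(2)[OF CT tp tx, of k] by (simp add: field_simps)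
qed

lemma D_AC: "(t, x) \<in> U \<Longrightarrow> Dk k (\<lambda>t x. - 1 / (2 * \<Theta> t x)) t x = Dk k \<Theta> t x / (2 * (\<Theta> t x)\<^sup>2)"
proof -
  assume tx: "(t, x) \<in> U"
  have "Dk k (\<lambda>t x. (- 1 / 2) * (1 / \<Theta> t x)) t x = Dk k (\<lambda>t x. - 1 / 2) t x * (1 / \<Theta> t x) + (- 1 / 2) * Dk k (\<lambda>t x. 1 / \<Theta> t x) t x"
    by (rule C1_mult(2)[OF C1_const C2_C1[OF C_inv(1)[OF CT tp]] tx])
  moreover have "(\<lambda>t x. - 1 / (2 * \<Theta> t x)) = (\<lambda>t x. (- 1 / 2) * (1 / \<Theta> t x))" by auto
  ultimately show ?thesis using C_inv(2)[OF CT tp tx, of k] by (simp add: Dk_const)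
qed

lemma CS2: "C2 U (\<lambda>t x. Ser \<gamma> 2 (\<beta> t x))" by (rule CS)
lemma Clr: "C2 U (\<lambda>t x. ln (\<rho> t x))" by (rule C_ln(1)[OF Cr rp])
lemma ClT: "C2 U (\<lambda>t x. ln (\<Theta> t x))" by (rule C_ln(1)[OF CT tp])
lemma ClS: "C2 U (\<lambda>t x. ln (Ser \<gamma> 2 (\<beta> t x)))" by (rule C_ln(1)[OF CS2 Spos])
lemma DlS: "(t, x) \<in> U \<Longrightarrow> Dk k (\<lambda>t x. ln (Ser \<gamma> 2 (\<beta> t x))) t x = Ser \<gamma> 3 (\<beta> t x) * Dk k \<beta> t x / Ser \<gamma> 2 (\<beta> t x)"
  using C_ln(2)[OF CS2 Spos, of t x k] DS[of t x k 2] by (simp add: numeral_3_eq_3 numeral_2_eq_2)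

lemma chF_eq: "(t, x) \<in> U \<Longrightarrow> chi_c \<gamma> (\<rho> t x) (\<Theta> t x) (\<beta> t x) = ln (\<rho> t x) + ln (\<Theta> t x) - ln (Ser \<gamma> 2 (\<beta> t x))"
  using rp[of t x] tp[of t x] Spos[of t x 2]
  by (simp add: chi_c_def Wsum_Ser[OF g bi] ln_div ln_mult)

lemma Cch: "C2 U (\<lambda>t x. chi_c \<gamma> (\<rho> t x) (\<Theta> t x) (\<beta> t x))"
  by (rule C2_local[OF C2_diff[OF Uo C2_add[OF Uo Clr ClT] ClS]]) (use chF_eq in auto)

lemma Dch: "(t, x) \<in> U \<Longrightarrow> Dk k (\<lambda>t x. chi_c \<gamma> (\<rho> t x) (\<Theta> t x) (\<beta> t x)) t x
   = Dk k \<rho> t x / \<rho> t x + Dk k \<Theta> t x / \<Theta> t x - Ser \<gamma> 3 (\<beta> t x) * Dk k \<beta> t x / Ser \<gamma> 2 (\<beta> t x)"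
proof -
  assume tx: "(t, x) \<in> U"
  have "Dk k (\<lambda>t x. chi_c \<gamma> (\<rho> t x) (\<Theta> t x) (\<beta> t x)) t x = Dk k (\<lambda>t x. ln (\<rho> t x) + ln (\<Theta> t x) - ln (Ser \<gamma> 2 (\<beta> t x))) t x"
    by (rule Dk_local[OF Uo tx]) (use chF_eq in auto)
  also have "\<dots> = Dk k (\<lambda>t x. ln (\<rho> t x)) t x + Dk k (\<lambda>t x. ln (\<Theta> t x)) t x - Dk k (\<lambda>t x. ln (Ser \<gamma> 2 (\<beta> t x))) t x"
    using C1_diff(2)[OF C1_add(1)[OF C2_C1[OF Clr] C2_C1[OF ClT]] C2_C1[OF ClS] tx]
          C1_add(2)[OF C2_C1[OF Clr] C2_C1[OF ClT] tx] by simp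
  finally show ?thesis using C_ln(2)[OF Cr rp tx] C_ln(2)[OF CT tp tx] DlS[OF tx] by simp
qed

lemma AA_eq: "(t, x) \<in> U \<Longrightarrow> ln (\<rho> t x / Zfun CARD('n) \<gamma> (\<beta> t x) (\<Theta> t x))
   = ln (\<rho> t x) - (real CARD('n) / 2) * ln (2 * pi) - (real CARD('n) / 2) * ln (\<Theta> t x) - ln (Ser \<gamma> 2 (\<beta> t x))"
  using rp[of t x] tp[of t x] Spos[of t x 2]
  by (simp add: Zfun_def Wsum_Ser[OF g bi] ln_div ln_mult ln_powr) (simp add: algebra_simps)

lemma DAA: "(t, x) \<in> U \<Longrightarrow> Dk k (\<lambda>t x. ln (\<rho> t x / Zfun CARD('n) \<gamma> (\<beta> t x) (\<Theta> t x))) t x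
   = Dk k \<rho> t x / \<rho> t x - (real CARD('n) / 2) * (Dk k \<Theta> t x / \<Theta> t x) - Ser \<gamma> 3 (\<beta> t x) * Dk k \<beta> t x / Ser \<gamma> 2 (\<beta> t x)"
proof -
  assume tx: "(t, x) \<in> U"
  let ?c = "real CARD('n) / 2"
  have "Dk k (\<lambda>t x. ln (\<rho> t x / Zfun CARD('n) \<gamma> (\<beta> t x) (\<Theta> t x))) t x
      = Dk k (\<lambda>t x. (ln (\<rho> t x) - ?c * ln (2 * pi)) - ?c * ln (\<Theta> t x) - ln (Ser \<gamma> 2 (\<beta> t x))) t x"
    by (rule Dk_local[OF Uo tx]) (use AA_eq in auto)
  also have "\<dots> = ((Dk k (\<lambda>t x. ln (\<rho> t x)) t x - Dk k (\<lambda>t x. ?c * ln (2 * pi)) t x) - Dk k (\<lambda>t x. ?c * ln (\<Theta> t x)) t x) - Dk k (\<lambda>t x. ln (Ser \<gamma> 2 (\<beta> t x))) t x"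
  proof -
    have c1: "C1 U (\<lambda>t x. ln (\<rho> t x) - ?c * ln (2 * pi))" by (rule C1_diff(1)[OF C2_C1[OF Clr] C1_const])
    have c2: "C1 U (\<lambda>t x. ?c * ln (\<Theta> t x))" by (rule C1_mult(1)[OF C1_const C2_C1[OF ClT]])
    show ?thesis
      using C1_diff(2)[OF C1_diff(1)[OF c1 c2] C2_C1[OF ClS] tx] C1_diff(2)[OF c1 c2 tx]
            C1_diff(2)[OF C2_C1[OF Clr] C1_const tx] by simp
  qed
  also have "Dk k (\<lambda>t x. ?c * ln (\<Theta> t x)) t x = ?c * Dk k (\<lambda>t x. ln (\<Theta> t x)) t x"
    by (simp only: C1_mult(2)[OF C1_const C2_C1[OF ClT] tx] Dk_const mult_zero_left add_0_left)
  finally show ?thesis using C_ln(2)[OF Cr rp tx] C_ln(2)[OF CT tp tx] DlS[OF tx] by (simp add: Dk_const)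
qed

end


context setting begin

lemma pdt_local: "(t, x) \<in> U \<Longrightarrow> \<forall>(t, x)\<in>U. f t x = h t x \<Longrightarrow> pdt f t x = pdt h t x"
  unfolding pdt_Dk by (rule Dk_local[OF Uo])
lemma pdx_local: "(t, x) \<in> U \<Longrightarrow> \<forall>(t, x)\<in>U. f t x = h t x \<Longrightarrow> pdx i f t x = pdx i h t x"
  unfolding pdx_Dk by (rule Dk_local[OF Uo])
lemma divg_local: "(t, x) \<in> U \<Longrightarrow> \<forall>(t, x)\<in>U. F t x = H t x \<Longrightarrow> divg F t x = divg H t x"
  unfolding divg_def by (intro sum.cong refl pdx_local) auto

lemma pdx_cmult: "C1 U f \<Longrightarrow> (t, x) \<in> U \<Longrightarrow> pdx i (\<lambda>t x. c * f t x) t x = c * pdx i f t x"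
  unfolding pdx_Dk by (simp only: C1_mult(2)[OF C1_const] Dk_const mult_zero_left add_0_left)
lemma pdx_add: "C1 U f \<Longrightarrow> C1 U h \<Longrightarrow> (t, x) \<in> U \<Longrightarrow> pdx i (\<lambda>t x. f t x + h t x) t x = pdx i f t x + pdx i h t x"
  unfolding pdx_Dk by (rule C1_add(2))

lemma divg_scale:
  assumes "\<And>k. C1 U (\<lambda>t x. H t x $ k)" "(t, x) \<in> U"
  shows "divg (\<lambda>t x. c *\<^sub>R H t x) t x = c * divg H t x"
proof -
  have "divg (\<lambda>t x. c *\<^sub>R H t x) t x = (\<Sum>i\<in>UNIV. pdx i (\<lambda>t x. c * H t x $ i) t x)"
    by (simp add: divg_def)
  also have "\<dots> = (\<Sum>i\<in>UNIV. c * pdx i (\<lambda>t x. H t x $ i) t x)"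
    by (intro sum.cong refl pdx_cmult assms)
  finally show ?thesis by (simp add: divg_def sum_distrib_left)
qed

lemma Cm1: "C2 U (\<lambda>t x. avg \<gamma> (\<beta> t x) (\<lambda>m. 1 / real m))"
  by (rule C2_local[OF C2_mult[OF Uo CS C_inv(1)[OF CS2 Spos]]]) (auto simp: avg1_Ser[OF g bi])
lemma Cm2: "C2 U (\<lambda>t x. avg \<gamma> (\<beta> t x) (\<lambda>m. 1 / (real m)\<^sup>2))"
  by (rule C2_local[OF C2_mult[OF Uo CS C_inv(1)[OF CS2 Spos]]]) (auto simp: avg2_Ser[OF g bi])

lemma Cmu: "C2 U (\<lambda>t x. mu_c \<gamma> (\<rho> t x) (\<Theta> t x) (\<beta> t x))"
  unfolding mu_c_def by (intro C2_mult[OF Uo] Cr CT Cm1)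
lemma Cnu: "C2 U (\<lambda>t x. nu_c \<gamma> (\<rho> t x) (\<Theta> t x) (\<beta> t x))"
proof -
  have "C2 U (\<lambda>t x. (avg \<gamma> (\<beta> t x) (\<lambda>m. 1 / real m))\<^sup>2)"
    by (rule C2_local[OF C2_mult[OF Uo Cm1 Cm1]]) (simp add: power2_eq_square)
  then show ?thesis unfolding nu_c_def by (intro C2_mult[OF Uo] C2_diff[OF Uo] Cr CT Cm2)
qed
lemma Cka: "C2 U (\<lambda>t x. kappa_c CARD('n) \<gamma> (\<rho> t x) (\<Theta> t x) (\<beta> t x))"
  unfolding kappa_c_def by (intro C2_mult[OF Uo] Cr CT Cm2 C2_const)

end


lemma sig_sigma: "sig (jac u t x) = Defs.sigma u t x"
  by (simp add: sig_def Defs.sigma_def divg_def jac_def)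

context setting begin

lemma gAD: "(t, x) \<in> U \<Longrightarrow> grad (\<lambda>t x. Afield \<gamma> \<rho> u \<Theta> \<beta> t x (EDi j)) t x $ k
   = jac u t x $ j $ k / \<Theta> t x - u t x $ j * grad \<Theta> t x $ k / (\<Theta> t x)\<^sup>2"
proof -
  assume tx: "(t, x) \<in> U"
  have e: "(\<lambda>t x. Afield \<gamma> \<rho> u \<Theta> \<beta> t x (EDi j)) = (\<lambda>t x. u t x $ j / \<Theta> t x)"
    by (simp add: Afield_def Avar_def)
  show ?thesis unfolding e grad_def jac_def by (simp add: pdx_Dk D_AD[OF tx])
qed

lemma gAC: "(t, x) \<in> U \<Longrightarrow> grad (\<lambda>t x. Afield \<gamma> \<rho> u \<Theta> \<beta> t x EC) t x = (1 / (2 * (\<Theta> t x)\<^sup>2)) *\<^sub>R grad \<Theta> t x"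
proof -
  assume tx: "(t, x) \<in> U"
  have e: "(\<lambda>t x. Afield \<gamma> \<rho> u \<Theta> \<beta> t x EC) = (\<lambda>t x. - 1 / (2 * \<Theta> t x))"
    by (simp add: Afield_def Avar_def)
  show ?thesis unfolding e grad_def pdx_Dk by (simp only: D_AC[OF tx]) (simp add: vec_eq_iff)
qed

lemma gAAC: "(t, x) \<in> U \<Longrightarrow> grad (\<lambda>t x. Afield \<gamma> \<rho> u \<Theta> \<beta> t x EA) t x
     + ((real CARD('n) + 2) * \<Theta> t x) *\<^sub>R grad (\<lambda>t x. Afield \<gamma> \<rho> u \<Theta> \<beta> t x EC) t x
   = grad (\<lambda>t x. chi_c \<gamma> (\<rho> t x) (\<Theta> t x) (\<beta> t x)) t x"
proof -
  assume tx: "(t, x) \<in> U"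
  have e: "(\<lambda>t x. Afield \<gamma> \<rho> u \<Theta> \<beta> t x EA) = (\<lambda>t x. ln (\<rho> t x / Zfun CARD('n) \<gamma> (\<beta> t x) (\<Theta> t x)))"
    by (simp add: Afield_def Avar_def)
  show ?thesis unfolding e gAC[OF tx]
    using tp[OF tx] by (simp add: vec_eq_iff grad_def pdx_Dk DAA[OF tx] Dch[OF tx] field_simps power2_eq_square)
qed

lemma flux_EA: "(t, x) \<in> U \<Longrightarrow> (\<Sum>b\<in>UNIV. Xfield \<gamma> \<epsilon> \<rho> u \<Theta> \<beta> t x EA b *v grad (\<lambda>t x. Afield \<gamma> \<rho> u \<Theta> \<beta> t x b) t x)
   = \<epsilon> *\<^sub>R (nu_c \<gamma> (\<rho> t x) (\<Theta> t x) (\<beta> t x) *\<^sub>R grad (\<lambda>t x. chi_c \<gamma> (\<rho> t x) (\<Theta> t x) (\<beta> t x)) t x)"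
  unfolding Xfield_def by (rule row_EA[OF gAAC])

lemma flux_EB: "(\<Sum>b\<in>UNIV. Xfield \<gamma> \<epsilon> \<rho> u \<Theta> \<beta> t x EB b *v grad (\<lambda>t x. Afield \<gamma> \<rho> u \<Theta> \<beta> t x b) t x) = 0"
  by (simp add: Xfield_def Xblk_def mv_zero)

lemma flux_ED: "(t, x) \<in> U \<Longrightarrow> (\<Sum>b\<in>UNIV. Xfield \<gamma> \<epsilon> \<rho> u \<Theta> \<beta> t x (EDi i) b *v grad (\<lambda>t x. Afield \<gamma> \<rho> u \<Theta> \<beta> t x b) t x)
   = \<epsilon> *\<^sub>R (\<chi> k. mu_c \<gamma> (\<rho> t x) (\<Theta> t x) (\<beta> t x) * Defs.sigma u t x $ i $ k)"
  unfolding Xfield_def sig_sigma[symmetric] by (rule row_ED[OF tp gAD gAC])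

lemma flux_EC: "(t, x) \<in> U \<Longrightarrow> (\<Sum>b\<in>UNIV. Xfield \<gamma> \<epsilon> \<rho> u \<Theta> \<beta> t x EC b *v grad (\<lambda>t x. Afield \<gamma> \<rho> u \<Theta> \<beta> t x b) t x)
   = \<epsilon> *\<^sub>R (((real CARD('n) + 2) * nu_c \<gamma> (\<rho> t x) (\<Theta> t x) (\<beta> t x) * \<Theta> t x) *\<^sub>R grad (\<lambda>t x. chi_c \<gamma> (\<rho> t x) (\<Theta> t x) (\<beta> t x)) t x
       + (2 * kappa_c CARD('n) \<gamma> (\<rho> t x) (\<Theta> t x) (\<beta> t x)) *\<^sub>R grad \<Theta> t x
       + (2 * mu_c \<gamma> (\<rho> t x) (\<Theta> t x) (\<beta> t x)) *\<^sub>R (Defs.sigma u t x *v u t x))"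
  unfolding Xfield_def sig_sigma[symmetric] by (rule row_EC[OF tp gAD gAC gAAC])

end


context setting begin

abbreviation "m1F \<equiv> (\<lambda>t x. avg \<gamma> (\<beta> t x) (\<lambda>m. 1 / real m))"

lemma Af: "Afield \<gamma> \<rho> u \<Theta> \<beta> t x = Avar \<gamma> (\<rho> t x) (u t x) (\<Theta> t x) (\<beta> t x)"
  by (simp add: Afield_def)

lemma LHS_EA: "(t, x) \<in> U \<Longrightarrow>
  pdt (\<lambda>t x. pSigma \<gamma> EA (Afield \<gamma> \<rho> u \<Theta> \<beta> t x)) t x + divg (\<lambda>t x. pPhi \<gamma> EA (Afield \<gamma> \<rho> u \<Theta> \<beta> t x)) t x
  = pdt (\<lambda>t x. \<rho> t x * avg \<gamma> (\<beta> t x) (\<lambda>m. 1 / real m)) t x + divg (\<lambda>t x. (\<rho> t x * avg \<gamma> (\<beta> t x) (\<lambda>m. 1 / real m)) *\<^sub>R u t x) t x"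
  by (intro arg_cong2[where f="(+)"] pdt_local divg_local) (auto simp: Af intro!: pS_EA[OF g] pP_EA[OF g] rp tp bi)

lemma LHS_EB: "(t, x) \<in> U \<Longrightarrow>
  pdt (\<lambda>t x. pSigma \<gamma> EB (Afield \<gamma> \<rho> u \<Theta> \<beta> t x)) t x + divg (\<lambda>t x. pPhi \<gamma> EB (Afield \<gamma> \<rho> u \<Theta> \<beta> t x)) t x
  = pdt \<rho> t x + divg (\<lambda>t x. \<rho> t x *\<^sub>R u t x) t x"
  by (intro arg_cong2[where f="(+)"] pdt_local divg_local) (auto simp: Af intro!: pS_EB[OF g] pP_EB[OF g] rp tp bi)

lemma LHS_EC: "(t, x) \<in> U \<Longrightarrow>
  pdt (\<lambda>t x. pSigma \<gamma> EC (Afield \<gamma> \<rho> u \<Theta> \<beta> t x)) t x + divg (\<lambda>t x. pPhi \<gamma> EC (Afield \<gamma> \<rho> u \<Theta> \<beta> t x)) t x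
  = pdt (\<lambda>t x. \<rho> t x * (norm (u t x))\<^sup>2 + real CARD('n) * \<rho> t x * \<Theta> t x * avg \<gamma> (\<beta> t x) (\<lambda>m. 1 / real m)) t x
    + divg (\<lambda>t x. (\<rho> t x * (norm (u t x))\<^sup>2) *\<^sub>R u t x + ((real CARD('n) + 2) * \<rho> t x * \<Theta> t x * avg \<gamma> (\<beta> t x) (\<lambda>m. 1 / real m)) *\<^sub>R u t x) t x"
  by (intro arg_cong2[where f="(+)"] pdt_local divg_local) (auto simp: Af intro!: pS_EC[OF g] pP_EC[OF g] rp tp bi)

lemma C1rTm: "C1 U (\<lambda>t x. \<rho> t x * \<Theta> t x * avg \<gamma> (\<beta> t x) (\<lambda>m. 1 / real m))"
  by (intro C1_mult C2_C1[OF Cr] C2_C1[OF CT] C2_C1[OF Cm1])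

lemma C1ruu: "C1 U (\<lambda>t x. \<rho> t x * (u t x $ i * u t x $ k))"
  by (intro C1_mult C2_C1[OF Cr] C2_C1[OF Cu])

lemma LHS_ED: "(t, x) \<in> U \<Longrightarrow>
  pdt (\<lambda>t x. pSigma \<gamma> (EDi i) (Afield \<gamma> \<rho> u \<Theta> \<beta> t x)) t x + divg (\<lambda>t x. pPhi \<gamma> (EDi i) (Afield \<gamma> \<rho> u \<Theta> \<beta> t x)) t x
  = ((\<chi> j. pdt (\<lambda>t x. \<rho> t x * u t x $ j) t x) + divm (\<lambda>t x. \<rho> t x *\<^sub>R outer (u t x) (u t x)) t x
      + grad (\<lambda>t x. \<rho> t x * \<Theta> t x * avg \<gamma> (\<beta> t x) (\<lambda>m. 1 / real m)) t x) $ i"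
proof -
  assume tx: "(t, x) \<in> U"
  have a: "pdt (\<lambda>t x. pSigma \<gamma> (EDi i) (Afield \<gamma> \<rho> u \<Theta> \<beta> t x)) t x = pdt (\<lambda>t x. \<rho> t x * u t x $ i) t x"
    by (intro pdt_local[OF tx]) (auto simp: Af intro!: pS_ED[OF g] rp tp bi)
  have "divg (\<lambda>t x. pPhi \<gamma> (EDi i) (Afield \<gamma> \<rho> u \<Theta> \<beta> t x)) t x
      = (\<Sum>k\<in>UNIV. pdx k (\<lambda>t x. \<rho> t x * (u t x $ i * u t x $ k) + axis i 1 $ k * (\<rho> t x * \<Theta> t x * avg \<gamma> (\<beta> t x) (\<lambda>m. 1 / real m))) t x)"
    unfolding divg_def
    by (intro sum.cong refl pdx_local[OF tx]) (auto simp: Af pP_ED[OF g] rp tp bi mult_ac)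
  also have "\<dots> = (\<Sum>k\<in>UNIV. pdx k (\<lambda>t x. \<rho> t x * (u t x $ i * u t x $ k)) t x + axis i 1 $ k * pdx k (\<lambda>t x. \<rho> t x * \<Theta> t x * avg \<gamma> (\<beta> t x) (\<lambda>m. 1 / real m)) t x)"
    by (intro sum.cong refl) (simp add: pdx_add[OF C1ruu C1_mult(1)[OF C1_const C1rTm] tx] pdx_cmult[OF C1rTm tx])
  also have "\<dots> = (\<Sum>k\<in>UNIV. pdx k (\<lambda>t x. \<rho> t x * (u t x $ i * u t x $ k)) t x) + pdx i (\<lambda>t x. \<rho> t x * \<Theta> t x * avg \<gamma> (\<beta> t x) (\<lambda>m. 1 / real m)) t x"
    by (simp add: sum.distrib axis_def if_distrib[where f="\<lambda>x. x * _"] cong: if_cong)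
  finally show ?thesis using a by (simp add: divm_def grad_def outer_def)
qed

end


context setting begin

lemma C1Du: "C1 U (\<lambda>t x. pdx k (\<lambda>t x. u t x $ i) t x)"
  unfolding pdx_Dk by (rule C2_Dk[OF Cu])

lemma C1DT: "C1 U (\<lambda>t x. pdx k \<Theta> t x)"
  unfolding pdx_Dk by (rule C2_Dk[OF CT])

lemma C1Dch: "C1 U (\<lambda>t x. pdx k (\<lambda>t x. chi_c \<gamma> (\<rho> t x) (\<Theta> t x) (\<beta> t x)) t x)"
  unfolding pdx_Dk by (rule C2_Dk[OF Cch])

lemma sigma_nth: "Defs.sigma u t x $ i $ k = pdx k (\<lambda>t x. u t x $ i) t x + pdx i (\<lambda>t x. u t x $ k) t x
   - (if i = k then 2 / real CARD('n) else 0) * (\<Sum>j\<in>UNIV. pdx j (\<lambda>t x. u t x $ j) t x)"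
  by (simp add: Defs.sigma_def jac_def transpose_def mat_def divg_def)

lemma C1sig: "C1 U (\<lambda>t x. Defs.sigma u t x $ i $ k)"
  unfolding sigma_nth
  by (intro C1_diff C1_add C1_mult C1_const C1Du C1_sum) auto

lemma CG_EA: "C1 U (\<lambda>t x. (nu_c \<gamma> (\<rho> t x) (\<Theta> t x) (\<beta> t x) *\<^sub>R grad (\<lambda>t x. chi_c \<gamma> (\<rho> t x) (\<Theta> t x) (\<beta> t x)) t x) $ k)"
  by (simp add: grad_def) (intro C1_mult C2_C1[OF Cnu] C1Dch)

lemma CG_ED: "C1 U (\<lambda>t x. (\<chi> k. mu_c \<gamma> (\<rho> t x) (\<Theta> t x) (\<beta> t x) * Defs.sigma u t x $ i $ k) $ k)"
  by simp (intro C1_mult C2_C1[OF Cmu] C1sig)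

lemma CG_EC: "C1 U (\<lambda>t x. (((real CARD('n) + 2) * nu_c \<gamma> (\<rho> t x) (\<Theta> t x) (\<beta> t x) * \<Theta> t x) *\<^sub>R grad (\<lambda>t x. chi_c \<gamma> (\<rho> t x) (\<Theta> t x) (\<beta> t x)) t x
       + (2 * kappa_c CARD('n) \<gamma> (\<rho> t x) (\<Theta> t x) (\<beta> t x)) *\<^sub>R grad \<Theta> t x
       + (2 * mu_c \<gamma> (\<rho> t x) (\<Theta> t x) (\<beta> t x)) *\<^sub>R (Defs.sigma u t x *v u t x)) $ k)"
  by (simp add: grad_def matrix_vector_mult_def)
     (intro C1_add C1_mult C1_const C2_C1[OF Cnu] C2_C1[OF CT] C2_C1[OF Cka] C2_C1[OF Cmu] C1Dch C1DT C1_sum C1sig C2_C1[OF Cu]; simp)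

lemma divg_zero: "divg (\<lambda>t x. 0) t x = 0"
  by (simp add: divg_def pdx_def)

lemma R_EA: "(t, x) \<in> U \<Longrightarrow>
  divg (\<lambda>t x. \<Sum>b\<in>UNIV. Xfield \<gamma> \<epsilon> \<rho> u \<Theta> \<beta> t x EA b *v grad (\<lambda>t x. Afield \<gamma> \<rho> u \<Theta> \<beta> t x b) t x) t x
  = \<epsilon> * divg (\<lambda>t x. nu_c \<gamma> (\<rho> t x) (\<Theta> t x) (\<beta> t x) *\<^sub>R grad (\<lambda>t x. chi_c \<gamma> (\<rho> t x) (\<Theta> t x) (\<beta> t x)) t x) t x"
proof -
  assume tx: "(t, x) \<in> U"
  have "divg (\<lambda>t x. \<Sum>b\<in>UNIV. Xfield \<gamma> \<epsilon> \<rho> u \<Theta> \<beta> t x EA b *v grad (\<lambda>t x. Afield \<gamma> \<rho> u \<Theta> \<beta> t x b) t x) t x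
     = divg (\<lambda>t x. \<epsilon> *\<^sub>R (nu_c \<gamma> (\<rho> t x) (\<Theta> t x) (\<beta> t x) *\<^sub>R grad (\<lambda>t x. chi_c \<gamma> (\<rho> t x) (\<Theta> t x) (\<beta> t x)) t x)) t x"
    by (rule divg_local[OF tx]) (auto simp only: flux_EA)
  also have "\<dots> = \<epsilon> * divg (\<lambda>t x. nu_c \<gamma> (\<rho> t x) (\<Theta> t x) (\<beta> t x) *\<^sub>R grad (\<lambda>t x. chi_c \<gamma> (\<rho> t x) (\<Theta> t x) (\<beta> t x)) t x) t x"
    by (rule divg_scale[OF CG_EA tx])
  finally show ?thesis .
qed

lemma R_EB:
  "divg (\<lambda>t x. \<Sum>b\<in>UNIV. Xfield \<gamma> \<epsilon> \<rho> u \<Theta> \<beta> t x EB b *v grad (\<lambda>t x. Afield \<gamma> \<rho> u \<Theta> \<beta> t x b) t x) t x = 0"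
  by (simp only: flux_EB divg_zero)

lemma R_ED: "(t, x) \<in> U \<Longrightarrow>
  divg (\<lambda>t x. \<Sum>b\<in>UNIV. Xfield \<gamma> \<epsilon> \<rho> u \<Theta> \<beta> t x (EDi i) b *v grad (\<lambda>t x. Afield \<gamma> \<rho> u \<Theta> \<beta> t x b) t x) t x
  = (\<epsilon> *\<^sub>R divm (\<lambda>t x. mu_c \<gamma> (\<rho> t x) (\<Theta> t x) (\<beta> t x) *\<^sub>R Defs.sigma u t x) t x) $ i"
proof -
  assume tx: "(t, x) \<in> U"
  have "divg (\<lambda>t x. \<Sum>b\<in>UNIV. Xfield \<gamma> \<epsilon> \<rho> u \<Theta> \<beta> t x (EDi i) b *v grad (\<lambda>t x. Afield \<gamma> \<rho> u \<Theta> \<beta> t x b) t x) t x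
    = \<epsilon> * divg (\<lambda>t x. \<chi> k. mu_c \<gamma> (\<rho> t x) (\<Theta> t x) (\<beta> t x) * Defs.sigma u t x $ i $ k) t x"
    by (subst divg_local[where H="\<lambda>t x. \<epsilon> *\<^sub>R (\<chi> k. mu_c \<gamma> (\<rho> t x) (\<Theta> t x) (\<beta> t x) * Defs.sigma u t x $ i $ k)"])
       (use tx in \<open>auto simp: flux_ED intro!: divg_scale CG_ED\<close>)
  then show ?thesis by (simp add: divg_def divm_def)
qed

lemma R_EC: "(t, x) \<in> U \<Longrightarrow>
  divg (\<lambda>t x. \<Sum>b\<in>UNIV. Xfield \<gamma> \<epsilon> \<rho> u \<Theta> \<beta> t x EC b *v grad (\<lambda>t x. Afield \<gamma> \<rho> u \<Theta> \<beta> t x b) t x) t x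
  = \<epsilon> * divg (\<lambda>t x. ((real CARD('n) + 2) * nu_c \<gamma> (\<rho> t x) (\<Theta> t x) (\<beta> t x) * \<Theta> t x) *\<^sub>R grad (\<lambda>t x. chi_c \<gamma> (\<rho> t x) (\<Theta> t x) (\<beta> t x)) t x
       + (2 * kappa_c CARD('n) \<gamma> (\<rho> t x) (\<Theta> t x) (\<beta> t x)) *\<^sub>R grad \<Theta> t x
       + (2 * mu_c \<gamma> (\<rho> t x) (\<Theta> t x) (\<beta> t x)) *\<^sub>R (Defs.sigma u t x *v u t x)) t x"
  by (subst divg_local[where H="\<lambda>t x. \<epsilon> *\<^sub>R (((real CARD('n) + 2) * nu_c \<gamma> (\<rho> t x) (\<Theta> t x) (\<beta> t x) * \<Theta> t x) *\<^sub>R grad (\<lambda>t x. chi_c \<gamma> (\<rho> t x) (\<Theta> t x) (\<beta> t x)) t x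
       + (2 * kappa_c CARD('n) \<gamma> (\<rho> t x) (\<Theta> t x) (\<beta> t x)) *\<^sub>R grad \<Theta> t x
       + (2 * mu_c \<gamma> (\<rho> t x) (\<Theta> t x) (\<beta> t x)) *\<^sub>R (Defs.sigma u t x *v u t x))"])
     (auto simp: flux_EC intro!: divg_scale CG_EC)

end


lemma all_eidx: "(\<forall>\<alpha>::('n::finite) eidx. P \<alpha>) \<longleftrightarrow> (\<forall>i. P (EDi i)) \<and> P EA \<and> P EB \<and> P EC"
  by (metis eidx.exhaust)

context setting begin

lemma point_equiv: "(t, x) \<in> U \<Longrightarrow> NSME \<gamma> \<epsilon> \<rho> u \<Theta> \<beta> t x \<longleftrightarrow> entropic_system \<gamma> \<epsilon> \<rho> u \<Theta> \<beta> t x"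
proof -
  assume tx: "(t, x) \<in> U"
  show ?thesis
    unfolding NSME_def Let_def entropic_system_def all_eidx vec_eq_iff[where x="_ + _ + _"]
    by (simp only: LHS_EA[OF tx] R_EA[OF tx] LHS_EB[OF tx] R_EB LHS_ED[OF tx] R_ED[OF tx] LHS_EC[OF tx] R_EC[OF tx]) blast
qed

end

theorem proposition4p5:
  fixes \<gamma> :: "nat \<Rightarrow> real" and \<epsilon> :: real
    and U :: "(real \<times> (real^'n)) set"
    and \<rho> \<Theta> \<beta> :: "real \<Rightarrow> real^'n \<Rightarrow> real"
    and u :: "real \<Rightarrow> real^'n \<Rightarrow> real^'n"
  assumes gamma_pos: "\<forall>m\<ge>1. \<gamma> m > 0"
    and S_ne: "Sset \<gamma> \<noteq> {}"
    and eps_pos: "\<epsilon> > 0"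
    and U_open: "open U"
    and smooth: "smooth_on U (\<lambda>(t, x). \<rho> t x)" "smooth_on U (\<lambda>(t, x). \<Theta> t x)"
      "smooth_on U (\<lambda>(t, x). \<beta> t x)" "\<forall>i. smooth_on U (\<lambda>(t, x). u t x $ i)"
    and pos: "\<forall>(t, x)\<in>U. \<rho> t x > 0 \<and> \<Theta> t x > 0 \<and> \<beta> t x \<in> interior (Sset \<gamma>)"
  shows "((\<forall>(t, x)\<in>U. NSME \<gamma> \<epsilon> \<rho> u \<Theta> \<beta> t x)
            \<longleftrightarrow> (\<forall>(t, x)\<in>U. entropic_system \<gamma> \<epsilon> \<rho> u \<Theta> \<beta> t x))
         \<and> (\<forall>(t, x)\<in>U. \<forall>\<alpha> \<beta>'. Xfield \<gamma> \<epsilon> \<rho> u \<Theta> \<beta> t x \<alpha> \<beta>'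
                                = transpose (Xfield \<gamma> \<epsilon> \<rho> u \<Theta> \<beta> t x \<beta>' \<alpha>))"
proof -
  interpret setting \<gamma> U \<rho> \<Theta> \<beta> u
    by unfold_locales (use gamma_pos U_open smooth pos in auto)
  show ?thesis
    using point_equiv by (auto simp: Xfield_def intro: Xblk_sym)
qed


end
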